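(* Let $\Omega\subset\mathbb{C}$ be a simply connected domain and let $(g,\mathcal{P},\mathcal{Q})$ be a Weierstrass data of the first kind on $\Omega$. Then there exists a map $\mathbf{X}=(\mathbf{x}_1,\mathbf{x}_2,\mathbf{x}_3,\mathbf{x}_4):\Omega\to\mathbb{L}^4$ (unique up to an additive constant vector) with $$\mathbf{X}_z=\mathcal{P}_z\begin{bmatrix}1/g\\ i/g\\ 1\\ 1\end{bmatrix}+\mathcal{Q}_z\begin{bmatrix}g\\ -ig\\ -1\\ 1\end{bmatrix},$$ and it satisfies: (i) $\mathbf{X}_{z\overline z}=\mathcal{Q}_{z\overline z}\,\mathcal{G}$, where $\mathcal{G}:=\big(2\,\mathrm{Re}\,g,\;2\,\mathrm{Im}\,g,\;-1+|g|^2,\;1+|g|^2\big)^T$; (ii) up to additive constants, $\mathbf{x}_3=\mathcal{P}-\mathcal{Q}$ and $\mathbf{x}_4=\mathcal{P}+\mathcal{Q}$; (iii) $\langle\mathcal{G},\mathcal{G}\rangle=0$ and $\langle\mathbf{X}_z,\mathcal{G}\rangle=0$; (iv) $\mathbf{X}$ is a conformal spacelike immersion whose induced metric is $$ds^2=\frac{4}{|g|^2}\left|\mathcal{P}_z-|g|^2\mathcal{Q}_z\right|^2|dz|^2;$$ (v) the surface $\mathbf{X}(\Omega)$ is marginally trapped, i.e. its mean curvature vector $\mathbf{H}$ satisfies $\langle\mathbf{H},\mathbf{H}\rangle=0$.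
   Context: $\Omega\subset\mathbb{R}^2\equiv\mathbb{C}$ has complex coordinate $z=u+iv$, and $\partial_z=\frac12(\partial_u-i\partial_v)$, $\partial_{\overline z}=\frac12(\partial_u+i\partial_v)$; subscripts denote partial derivatives. $\mathbb{L}^4$ is $\mathbb{R}^4$ with the Lorentzian metric $\langle x,y\rangle=x_1y_1+x_2y_2+x_3y_3-x_4y_4$; this form is extended complex-bilinearly to $\mathbb{C}^4$. A map $\mathbf{X}:\Omega\to\mathbb{L}^4$ is a conformal spacelike immersion with metric $\Lambda|dz|^2=\Lambda(du^2+dv^2)$, $\Lambda>0$, iff $\langle\mathbf{X}_z,\mathbf{X}_z\rangle=0$ and $\Lambda=2\langle\mathbf{X}_z,\overline{\mathbf{X}_z}\rangle>0$. Its mean curvature vector is $\mathbf{H}=\Delta_{ds^2}\mathbf{X}=\frac{4}{\Lambda}\mathbf{X}_{z\overline z}$. A spacelike surface is marginally trapped if $\langle\mathbf{H},\mathbf{H}\rangle=0$. A Weierstrass data of the first kind on $\Omega$ is a triple $(g,\mathcal{P},\mathcal{Q})$ where $g:\Omega\to\mathbb{C}\setminus\{0\}$ and $\mathcal{P},\mathcal{Q}:\Omega\to\mathbb{R}$ are $\mathcal{C}^2$, satisfying $g_{\overline z}=0$, $\mathcal{P}_{z\overline z}=|g|^2\mathcal{Q}_{z\overline z}$, and $\mathcal{P}_z-|g|^2\mathcal{Q}_z\neq0$ at every point of $\Omega$. *)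

theory Defs
  imports "HOL-Analysis.Analysis"
begin

definition pu :: "(complex \<Rightarrow> 'a::real_normed_vector) \<Rightarrow> complex \<Rightarrow> 'a" where
  "pu f z = vector_derivative (\<lambda>t::real. f (z + complex_of_real t)) (at 0)"

definition pv :: "(complex \<Rightarrow> 'a::real_normed_vector) \<Rightarrow> complex \<Rightarrow> 'a" where
  "pv f z = vector_derivative (\<lambda>t::real. f (z + \<i> * complex_of_real t)) (at 0)"

definition C1_on :: "complex set \<Rightarrow> (complex \<Rightarrow> 'a::real_normed_vector) \<Rightarrow> bool" where
  "C1_on S f \<longleftrightarrow> (\<forall>z\<in>S. f differentiable (at z)) \<and>
      continuous_on S (pu f) \<and> continuous_on S (pv f)"

definition C2_on :: "complex set \<Rightarrow> (complex \<Rightarrow> 'a::real_normed_vector) \<Rightarrow> bool" where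
  "C2_on S f \<longleftrightarrow> C1_on S f \<and> C1_on S (pu f) \<and> C1_on S (pv f)"

definition Dz :: "(complex \<Rightarrow> complex) \<Rightarrow> complex \<Rightarrow> complex" where
  "Dz f z = (pu f z - \<i> * pv f z) / 2"

definition Dzb :: "(complex \<Rightarrow> complex) \<Rightarrow> complex \<Rightarrow> complex" where
  "Dzb f z = (pu f z + \<i> * pv f z) / 2"

definition DzV :: "(complex \<Rightarrow> complex ^ 4) \<Rightarrow> complex \<Rightarrow> complex ^ 4" where
  "DzV F z = (1/2) *s (pu F z - \<i> *s pv F z)"

definition DzbV :: "(complex \<Rightarrow> complex ^ 4) \<Rightarrow> complex \<Rightarrow> complex ^ 4" where
  "DzbV F z = (1/2) *s (pu F z + \<i> *s pv F z)"

definition cvec :: "real ^ 4 \<Rightarrow> complex ^ 4" where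
  "cvec x = (\<chi> i. complex_of_real (x $ i))"

definition cfun :: "(complex \<Rightarrow> real) \<Rightarrow> complex \<Rightarrow> complex" where
  "cfun f = (\<lambda>z. complex_of_real (f z))"

text \<open>Lorentzian form on L^4, extended complex-bilinearly to C^4.\<close>
definition lor :: "complex ^ 4 \<Rightarrow> complex ^ 4 \<Rightarrow> complex" where
  "lor x y = x$1 * y$1 + x$2 * y$2 + x$3 * y$3 - x$4 * y$4"

definition cconj :: "complex ^ 4 \<Rightarrow> complex ^ 4" where
  "cconj x = (\<chi> i. cnj (x $ i))"

text \<open>Metric coefficient Lambda = 2 <X_z, conj X_z> and mean curvature vector H = (4/Lambda) X_{z zbar}.\<close>
definition Lam :: "(complex \<Rightarrow> real ^ 4) \<Rightarrow> complex \<Rightarrow> complex" where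
  "Lam X z = 2 * lor (DzV (\<lambda>w. cvec (X w)) z) (cconj (DzV (\<lambda>w. cvec (X w)) z))"

definition conformal_spacelike_immersion :: "complex set \<Rightarrow> (complex \<Rightarrow> real ^ 4) \<Rightarrow> bool" where
  "conformal_spacelike_immersion S X \<longleftrightarrow>
     (\<forall>z\<in>S. X differentiable (at z) \<and>
        lor (DzV (\<lambda>w. cvec (X w)) z) (DzV (\<lambda>w. cvec (X w)) z) = 0 \<and>
        Im (Lam X z) = 0 \<and> Re (Lam X z) > 0)"

definition meanH :: "(complex \<Rightarrow> real ^ 4) \<Rightarrow> complex \<Rightarrow> complex ^ 4" where
  "meanH X z = (4 / Lam X z) *s DzbV (DzV (\<lambda>w. cvec (X w))) z"

definition marginally_trapped :: "complex set \<Rightarrow> (complex \<Rightarrow> real ^ 4) \<Rightarrow> bool" where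
  "marginally_trapped S X \<longleftrightarrow> (\<forall>z\<in>S. lor (meanH X z) (meanH X z) = 0)"

definition weierstrass_first_kind ::
  "complex set \<Rightarrow> (complex \<Rightarrow> complex) \<Rightarrow> (complex \<Rightarrow> real) \<Rightarrow> (complex \<Rightarrow> real) \<Rightarrow> bool" where
  "weierstrass_first_kind S g P Q \<longleftrightarrow>
     g holomorphic_on S \<and> (\<forall>z\<in>S. g z \<noteq> 0) \<and> C2_on S P \<and> C2_on S Q \<and>
     (\<forall>z\<in>S. Dzb (Dz (cfun P)) z = complex_of_real ((cmod (g z))\<^sup>2) * Dzb (Dz (cfun Q)) z) \<and>
     (\<forall>z\<in>S. Dz (cfun P) z - complex_of_real ((cmod (g z))\<^sup>2) * Dz (cfun Q) z \<noteq> 0)"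

definition Pvec :: "complex \<Rightarrow> complex ^ 4" where
  "Pvec g = vector [1 / g, \<i> / g, 1, 1]"

definition Qvec :: "complex \<Rightarrow> complex ^ 4" where
  "Qvec g = vector [g, - \<i> * g, -1, 1]"

definition Gvec :: "complex \<Rightarrow> complex ^ 4" where
  "Gvec g = vector [complex_of_real (2 * Re g), complex_of_real (2 * Im g),
                    complex_of_real (-1 + (cmod g)\<^sup>2), complex_of_real (1 + (cmod g)\<^sup>2)]"

end

theory Submission
  imports Defs "HOL-Complex_Analysis.Complex_Analysis"
begin


lemma pu_eq:
  assumes "(f has_derivative Df) (at z)"
  shows "pu f z = Df 1"
proof -
  have l: "((\<lambda>t::real. z + complex_of_real t) has_derivative (\<lambda>t. complex_of_real t)) (at 0)"
    by (auto intro!: derivative_eq_intros)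
  have "((\<lambda>t::real. f (z + complex_of_real t)) has_derivative (\<lambda>t. Df (complex_of_real t))) (at 0)"
    using has_derivative_compose[OF l, of f Df] assms by simp
  moreover have "Df (complex_of_real t) = t *\<^sub>R Df 1" for t
    using linear_scale[OF has_derivative_linear[OF assms], of t 1]
    by (simp add: scaleR_conv_of_real)
  ultimately have "((\<lambda>t::real. f (z + complex_of_real t)) has_vector_derivative Df 1) (at 0)"
    by (simp add: has_vector_derivative_def)
  then show ?thesis unfolding pu_def by (rule vector_derivative_at)
qed

lemma pv_eq:
  assumes "(f has_derivative Df) (at z)"
  shows "pv f z = Df \<i>"
proof -
  have l: "((\<lambda>t::real. z + \<i> * complex_of_real t) has_derivative (\<lambda>t. \<i> * complex_of_real t)) (at 0)"
    by (auto intro!: derivative_eq_intros)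
  have "((\<lambda>t::real. f (z + \<i> * complex_of_real t)) has_derivative (\<lambda>t. Df (\<i> * complex_of_real t))) (at 0)"
    using has_derivative_compose[OF l, of f Df] assms by simp
  moreover have "Df (\<i> * complex_of_real t) = t *\<^sub>R Df \<i>" for t
    using linear_scale[OF has_derivative_linear[OF assms], of t \<i>]
    by (simp add: scaleR_conv_of_real ac_simps)
  ultimately have "((\<lambda>t::real. f (z + \<i> * complex_of_real t)) has_vector_derivative Df \<i>) (at 0)"
    by (simp add: has_vector_derivative_def)
  then show ?thesis unfolding pv_def by (rule vector_derivative_at)
qed

lemma lin_decomp:
  assumes "linear Df"
  shows "Df h = Re h *\<^sub>R Df 1 + Im h *\<^sub>R Df \<i>"
proof -
  have "h = Re h *\<^sub>R 1 + Im h *\<^sub>R \<i>" by (simp add: complex_eq_iff)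
  then have "Df h = Df (Re h *\<^sub>R 1 + Im h *\<^sub>R \<i>)" by (rule arg_cong)
  also have "\<dots> = Df (Re h *\<^sub>R 1) + Df (Im h *\<^sub>R \<i>)" by (rule linear_add[OF assms])
  also have "\<dots> = Re h *\<^sub>R Df 1 + Im h *\<^sub>R Df \<i>"
    by (simp only: linear_scale[OF assms])
  finally show ?thesis .
qed

lemma deriv_from_partials:
  assumes "(f has_derivative Df) (at z)"
  shows "(f has_derivative (\<lambda>h. Re h *\<^sub>R pu f z + Im h *\<^sub>R pv f z)) (at z)"
proof (rule has_derivative_eq_rhs[OF assms])
  show "Df = (\<lambda>h. Re h *\<^sub>R pu f z + Im h *\<^sub>R pv f z)"
    unfolding pu_eq[OF assms] pv_eq[OF assms]
    using lin_decomp[OF has_derivative_linear[OF assms]] by (rule ext)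
qed

lemma C1_deriv:
  assumes "C1_on S f" "z \<in> S"
  shows "(f has_derivative (\<lambda>h. Re h *\<^sub>R pu f z + Im h *\<^sub>R pv f z)) (at z)"
  using assms unfolding C1_on_def differentiable_def by (metis deriv_from_partials)



lemma hd_u:
  fixes f :: "complex \<Rightarrow> real"
  assumes "(f has_derivative (\<lambda>h. Re h *\<^sub>R a + Im h *\<^sub>R b)) (at (c + complex_of_real s))"
  shows "((\<lambda>s. f (c + complex_of_real s)) has_real_derivative a) (at s)"
proof -
  have l: "((\<lambda>s::real. c + complex_of_real s) has_derivative (\<lambda>t. complex_of_real t)) (at s)"
    by (auto intro!: derivative_eq_intros)
  have "((\<lambda>s. f (c + complex_of_real s)) has_derivative
     (\<lambda>t. Re (complex_of_real t) *\<^sub>R a + Im (complex_of_real t) *\<^sub>R b)) (at s)"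
    using has_derivative_compose[OF l assms] by simp
  then show ?thesis
    unfolding has_field_derivative_def by (rule has_derivative_eq_rhs) (auto simp: fun_eq_iff)
qed

lemma hd_v:
  fixes f :: "complex \<Rightarrow> real"
  assumes "(f has_derivative (\<lambda>h. Re h *\<^sub>R a + Im h *\<^sub>R b)) (at (c + \<i> * complex_of_real s))"
  shows "((\<lambda>s. f (c + \<i> * complex_of_real s)) has_real_derivative b) (at s)"
proof -
  have l: "((\<lambda>s::real. c + \<i> * complex_of_real s) has_derivative (\<lambda>t. \<i> * complex_of_real t)) (at s)"
    by (auto intro!: derivative_eq_intros)
  have "((\<lambda>s. f (c + \<i> * complex_of_real s)) has_derivative
     (\<lambda>t. Re (\<i> * complex_of_real t) *\<^sub>R a + Im (\<i> * complex_of_real t) *\<^sub>R b)) (at s)"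
    using has_derivative_compose[OF l assms] by simp
  then show ?thesis
    unfolding has_field_derivative_def by (rule has_derivative_eq_rhs) (auto simp: fun_eq_iff)
qed

lemma C2_parts:
  assumes "C2_on S f"
  shows "C1_on S f" "C1_on S (pu f)" "C1_on S (pv f)"
  using assms unfolding C2_on_def by auto

lemma schwarz:
  fixes f :: "complex \<Rightarrow> real"
  assumes S: "open S" "z \<in> S" and C2: "C2_on S f"
  shows "pv (pu f) z = pu (pv f) z"
proof -
  define A1 where "A1 = pu (pu f) z"
  define A where "A = pv (pu f) z"
  define B where "B = pu (pv f) z"
  define B2 where "B2 = pv (pv f) z"
  have Df: "\<And>w. w \<in> S \<Longrightarrow> (f has_derivative (\<lambda>h. Re h *\<^sub>R pu f w + Im h *\<^sub>R pv f w)) (at w)"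
    using C1_deriv[OF C2_parts(1)[OF C2]] .
  have Du: "(pu f has_derivative (\<lambda>h. Re h *\<^sub>R A1 + Im h *\<^sub>R A)) (at z)"
    using C1_deriv[OF C2_parts(2)[OF C2] S(2)] unfolding A1_def A_def .
  have Dv: "(pv f has_derivative (\<lambda>h. Re h *\<^sub>R B + Im h *\<^sub>R B2)) (at z)"
    using C1_deriv[OF C2_parts(3)[OF C2] S(2)] unfolding B_def B2_def .
  obtain r where r: "r > 0" "ball z r \<subseteq> S" using S openE by blast
  have main: "\<bar>A - B\<bar> \<le> 8 * e" if e: "e > 0" for e
  proof -
    obtain d1 where d1: "d1 > 0" "\<And>y. norm (y - z) < d1 \<Longrightarrow>
        norm (pu f y - pu f z - (Re (y - z) *\<^sub>R A1 + Im (y - z) *\<^sub>R A)) \<le> e * norm (y - z)"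
      using Du e unfolding has_derivative_at_alt by blast
    obtain d2 where d2: "d2 > 0" "\<And>y. norm (y - z) < d2 \<Longrightarrow>
        norm (pv f y - pv f z - (Re (y - z) *\<^sub>R B + Im (y - z) *\<^sub>R B2)) \<le> e * norm (y - z)"
      using Dv e unfolding has_derivative_at_alt by blast
    define t where "t = min r (min d1 d2) / 4"
    have t: "t > 0" "4 * t \<le> r" "4 * t \<le> d1" "4 * t \<le> d2"
      using r d1 d2 by (auto simp: t_def)
    have inS: "z + complex_of_real a + \<i> * complex_of_real b \<in> S"
      if "0 \<le> a" "a \<le> t" "0 \<le> b" "b \<le> t" for a b
    proof -
      have "norm (complex_of_real a + \<i> * complex_of_real b) \<le> \<bar>a\<bar> + \<bar>b\<bar>"
        by (metis norm_triangle_ineq norm_ii norm_mult norm_of_real mult_1)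
      also have "\<dots> < r" using that t by auto
      finally have "z + (complex_of_real a + \<i> * complex_of_real b) \<in> ball z r"
        unfolding mem_ball by (subst dist_commute) (simp add: dist_norm)
      then show ?thesis using r(2) by (auto simp: add.assoc)
    qed
    have nrm: "norm (complex_of_real a + \<i> * complex_of_real b) \<le> 2 * t"
      if "0 \<le> a" "a \<le> t" "0 \<le> b" "b \<le> t" for a b
    proof -
      have "norm (complex_of_real a + \<i> * complex_of_real b) \<le> \<bar>a\<bar> + \<bar>b\<bar>"
        by (metis norm_triangle_ineq norm_ii norm_mult norm_of_real mult_1)
      then show ?thesis using that by auto
    qed
    define \<Delta> where "\<Delta> = f (z + complex_of_real t + \<i> * complex_of_real t) - f (z + complex_of_real t)
        - f (z + \<i> * complex_of_real t) + f z"
    have "\<exists>\<xi>. 0 < \<xi> \<and> \<xi> < t \<and>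
       (f (z + \<i> * complex_of_real t + complex_of_real t) - f (z + complex_of_real t)) -
       (f (z + \<i> * complex_of_real t + complex_of_real 0) - f (z + complex_of_real 0)) =
       (t - 0) * (pu f (z + \<i> * complex_of_real t + complex_of_real \<xi>) - pu f (z + complex_of_real \<xi>))"
    proof (rule MVT2[OF t(1)])
      fix s assume s: "0 \<le> s" "s \<le> t"
      have s1: "z + \<i> * complex_of_real t + complex_of_real s \<in> S"
        using inS[of s t] s t by (simp add: ac_simps)
      have s2: "z + complex_of_real s \<in> S"
        using inS[of s 0] s t by simp
      show "((\<lambda>s. f (z + \<i> * complex_of_real t + complex_of_real s) - f (z + complex_of_real s))
          has_real_derivative (pu f (z + \<i> * complex_of_real t + complex_of_real s) - pu f (z + complex_of_real s))) (at s)"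
        by (intro DERIV_diff hd_u[where b="pv f (z + \<i> * complex_of_real t + complex_of_real s)"]
              hd_u[where b="pv f (z + complex_of_real s)"] Df s1 s2)
    qed
    then obtain \<xi> where xi: "0 < \<xi>" "\<xi> < t"
      "\<Delta> = t * (pu f (z + \<i> * complex_of_real t + complex_of_real \<xi>) - pu f (z + complex_of_real \<xi>))"
      unfolding \<Delta>_def by (auto simp: ac_simps)
    have "\<exists>\<eta>. 0 < \<eta> \<and> \<eta> < t \<and>
       (f (z + complex_of_real t + \<i> * complex_of_real t) - f (z + \<i> * complex_of_real t)) -
       (f (z + complex_of_real t + \<i> * complex_of_real 0) - f (z + \<i> * complex_of_real 0)) =
       (t - 0) * (pv f (z + complex_of_real t + \<i> * complex_of_real \<eta>) - pv f (z + \<i> * complex_of_real \<eta>))"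
    proof (rule MVT2[OF t(1)])
      fix s assume s: "0 \<le> s" "s \<le> t"
      have s1: "z + complex_of_real t + \<i> * complex_of_real s \<in> S"
        using inS[of t s] s t by (simp add: ac_simps)
      have s2: "z + \<i> * complex_of_real s \<in> S"
        using inS[of 0 s] s t by simp
      show "((\<lambda>s. f (z + complex_of_real t + \<i> * complex_of_real s) - f (z + \<i> * complex_of_real s))
          has_real_derivative (pv f (z + complex_of_real t + \<i> * complex_of_real s) - pv f (z + \<i> * complex_of_real s))) (at s)"
        by (intro DERIV_diff hd_v[where a="pu f (z + complex_of_real t + \<i> * complex_of_real s)"]
              hd_v[where a="pu f (z + \<i> * complex_of_real s)"] Df s1 s2)
    qed
    then obtain \<eta> where eta: "0 < \<eta>" "\<eta> < t"
      "\<Delta> = t * (pv f (z + complex_of_real t + \<i> * complex_of_real \<eta>) - pv f (z + \<i> * complex_of_real \<eta>))"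
      unfolding \<Delta>_def by (auto simp: ac_simps)
    have e1: "\<bar>pu f (z + \<i> * complex_of_real t + complex_of_real \<xi>) - pu f z - (\<xi> * A1 + t * A)\<bar> \<le> e * (2 * t)"
    proof -
      have n: "norm (complex_of_real \<xi> + \<i> * complex_of_real t) \<le> 2 * t" using nrm[of \<xi> t] xi t by simp
      have "\<bar>pu f (z + \<i> * complex_of_real t + complex_of_real \<xi>) - pu f z - (\<xi> * A1 + t * A)\<bar>
          \<le> e * norm (complex_of_real \<xi> + \<i> * complex_of_real t)"
        using d1(2)[of "z + \<i> * complex_of_real t + complex_of_real \<xi>"] n t by (simp add: ac_simps)
      also have "\<dots> \<le> e * (2 * t)" using n e by (simp add: mult_left_mono)
      finally show ?thesis .
    qed
    have e2: "\<bar>pu f (z + complex_of_real \<xi>) - pu f z - \<xi> * A1\<bar> \<le> e * (2 * t)"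
    proof -
      have n: "norm (complex_of_real \<xi>) \<le> 2 * t" using xi by simp
      have "\<bar>pu f (z + complex_of_real \<xi>) - pu f z - \<xi> * A1\<bar> \<le> e * norm (complex_of_real \<xi>)"
        using d1(2)[of "z + complex_of_real \<xi>"] n t by simp
      also have "\<dots> \<le> e * (2 * t)" using n e by (simp add: mult_left_mono)
      finally show ?thesis .
    qed
    have e3: "\<bar>pv f (z + complex_of_real t + \<i> * complex_of_real \<eta>) - pv f z - (t * B + \<eta> * B2)\<bar> \<le> e * (2 * t)"
    proof -
      have n: "norm (complex_of_real t + \<i> * complex_of_real \<eta>) \<le> 2 * t" using nrm[of t \<eta>] eta t by simp
      have "\<bar>pv f (z + complex_of_real t + \<i> * complex_of_real \<eta>) - pv f z - (t * B + \<eta> * B2)\<bar>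
          \<le> e * norm (complex_of_real t + \<i> * complex_of_real \<eta>)"
        using d2(2)[of "z + complex_of_real t + \<i> * complex_of_real \<eta>"] n t by (simp add: ac_simps)
      also have "\<dots> \<le> e * (2 * t)" using n e by (simp add: mult_left_mono)
      finally show ?thesis .
    qed
    have e4: "\<bar>pv f (z + \<i> * complex_of_real \<eta>) - pv f z - \<eta> * B2\<bar> \<le> e * (2 * t)"
    proof -
      have n: "norm (\<i> * complex_of_real \<eta>) \<le> 2 * t" using eta by (simp add: norm_mult)
      have "\<bar>pv f (z + \<i> * complex_of_real \<eta>) - pv f z - \<eta> * B2\<bar> \<le> e * norm (\<i> * complex_of_real \<eta>)"
        using d2(2)[of "z + \<i> * complex_of_real \<eta>"] n t by simp
      also have "\<dots> \<le> e * (2 * t)" using n e by (simp add: mult_left_mono)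
      finally show ?thesis .
    qed
    have "\<bar>t * A - t * B\<bar> \<le> 4 * e * 2 * t"
    proof -
      have eq: "t * (pu f (z + \<i> * complex_of_real t + complex_of_real \<xi>) - pu f (z + complex_of_real \<xi>))
              = t * (pv f (z + complex_of_real t + \<i> * complex_of_real \<eta>) - pv f (z + \<i> * complex_of_real \<eta>))"
        by (rule trans[OF xi(3)[symmetric] eta(3)])
      then have eq': "pu f (z + \<i> * complex_of_real t + complex_of_real \<xi>) - pu f (z + complex_of_real \<xi>)
              = pv f (z + complex_of_real t + \<i> * complex_of_real \<eta>) - pv f (z + \<i> * complex_of_real \<eta>)"
        using t(1) by simp
      show ?thesis using e1 e2 e3 e4 eq' by (simp add: abs_le_iff)
    qed
    moreover have "\<bar>t * A - t * B\<bar> = t * \<bar>A - B\<bar>" using t(1)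
      by (simp add: right_diff_distrib[symmetric] abs_mult)
    moreover have "4 * e * 2 * t = t * (8 * e)" by simp
    ultimately have "t * \<bar>A - B\<bar> \<le> t * (8 * e)" by linarith
    then show "\<bar>A - B\<bar> \<le> 8 * e" using t(1) by (simp add: mult_le_cancel_left_pos)
  qed
  have "A = B"
  proof (rule ccontr)
    assume "A \<noteq> B"
    then have "\<bar>A - B\<bar> > 0" by simp
    from main[of "\<bar>A - B\<bar> / 16"] this show False by simp
  qed
  then show ?thesis unfolding A_def B_def .
qed



definition sint :: "(real \<Rightarrow> real) \<Rightarrow> real \<Rightarrow> real \<Rightarrow> real" where
  "sint f c x = (if c \<le> x then integral {c..x} f else - integral {x..c} f)"

lemma sint_combine:
  assumes f: "continuous_on {l..r} f" and c: "c \<in> {l..r}" and y: "y \<in> {l..r}"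
  shows "sint f c y = integral {l..y} f - integral {l..c} f"
proof (cases "c \<le> y")
  case True
  have "integral {l..c} f + integral {c..y} f = integral {l..y} f"
    using c y True by (intro Henstock_Kurzweil_Integration.integral_combine integrable_continuous_real continuous_on_subset[OF f]) auto
  then show ?thesis using True by (simp add: sint_def)
next
  case False
  have "integral {l..y} f + integral {y..c} f = integral {l..c} f"
    using c y False by (intro Henstock_Kurzweil_Integration.integral_combine integrable_continuous_real continuous_on_subset[OF f]) auto
  then show ?thesis using False by (simp add: sint_def)
qed

lemma sint_deriv:
  fixes f :: "real \<Rightarrow> real"
  assumes J: "open J" "is_interval J" "c \<in> J" "x \<in> J" and f: "continuous_on J f"
  shows "((\<lambda>y. sint f c y) has_real_derivative f x) (at x)"
proof -
  define m where "m = min c x"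
  define M where "M = max c x"
  have m1: "m \<in> J" "M \<in> J" using J by (auto simp: m_def M_def min_def max_def)
  have mM: "m \<le> c" "m \<le> x" "c \<le> M" "x \<le> M" by (auto simp: m_def M_def)
  obtain d1 where d1: "d1 > 0" "ball m d1 \<subseteq> J" using J(1) m1(1) openE by blast
  obtain d2 where d2: "d2 > 0" "ball M d2 \<subseteq> J" using J(1) m1(2) openE by blast
  define l where "l = m - d1 / 2"
  define r where "r = M + d2 / 2"
  have "l \<in> ball m d1" using d1(1) by (simp add: l_def dist_real_def)
  then have lJ: "l \<in> J" by (rule subsetD[OF d1(2)])
  have "r \<in> ball M d2" using d2(1) by (simp add: r_def dist_real_def)
  then have rJ: "r \<in> J" by (rule subsetD[OF d2(2)])
  have sub: "{l..r} \<subseteq> J" using J(2) lJ rJ unfolding is_interval_1 by (meson atLeastAtMost_iff subsetI)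
  have cont: "continuous_on {l..r} f" using continuous_on_subset[OF f sub] .
  have xin: "x \<in> {l<..<r}" "c \<in> {l..r}" using d1(1) d2(1) mM by (auto simp: l_def r_def)
  have "((\<lambda>y. integral {l..y} f - integral {l..c} f) has_real_derivative f x) (at x within {l..r})"
  proof -
    have "((\<lambda>y. integral {l..y} f) has_real_derivative f x) (at x within {l..r})"
      using xin by (intro integral_has_real_derivative[OF cont]) auto
    from DERIV_diff[OF this DERIV_const] show ?thesis by simp
  qed
  moreover have sub2: "{l<..<r} \<subseteq> {l..r}" by auto
  ultimately have "((\<lambda>y. integral {l..y} f - integral {l..c} f) has_real_derivative f x) (at x within {l<..<r})"
    by (rule has_field_derivative_subset)
  then have "((\<lambda>y. integral {l..y} f - integral {l..c} f) has_real_derivative f x) (at x)"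
    unfolding at_within_open[OF xin(1) open_greaterThanLessThan] .
  then show ?thesis
    by (rule has_field_derivative_transform_within_open[where S="{l<..<r}"])
       (use xin in \<open>auto intro!: sint_combine[OF cont, symmetric]\<close>)
qed

lemma line_u:
  fixes g :: "complex \<Rightarrow> real"
  assumes "(g has_derivative Dg) (at (c + complex_of_real s))"
  shows "((\<lambda>s. g (c + complex_of_real s)) has_real_derivative Dg 1) (at s)"
proof -
  have l: "((\<lambda>s::real. c + complex_of_real s) has_derivative (\<lambda>t. complex_of_real t)) (at s)"
    by (auto intro!: derivative_eq_intros)
  have "Dg (complex_of_real t) = t * Dg 1" for t
    using linear_scale[OF has_derivative_linear[OF assms], of t 1]
    by (simp add: scaleR_conv_of_real)
  then show ?thesis
    using has_derivative_compose[OF l assms] unfolding has_field_derivative_def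
    by (rule_tac has_derivative_eq_rhs) (auto simp: fun_eq_iff ac_simps)
qed

lemma line_v:
  fixes g :: "complex \<Rightarrow> real"
  assumes "(g has_derivative Dg) (at (c + \<i> * complex_of_real s))"
  shows "((\<lambda>s. g (c + \<i> * complex_of_real s)) has_real_derivative Dg \<i>) (at s)"
proof -
  have l: "((\<lambda>s::real. c + \<i> * complex_of_real s) has_derivative (\<lambda>t. \<i> * complex_of_real t)) (at s)"
    by (auto intro!: derivative_eq_intros)
  have "Dg (\<i> * complex_of_real t) = t * Dg \<i>" for t
    using linear_scale[OF has_derivative_linear[OF assms], of t \<i>]
    by (simp add: scaleR_conv_of_real ac_simps)
  then show ?thesis
    using has_derivative_compose[OF l assms] unfolding has_field_derivative_def
    by (rule_tac has_derivative_eq_rhs) (auto simp: fun_eq_iff ac_simps)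
qed



lemma open_strip: "open J \<Longrightarrow> open {w::complex. Im w \<in> J}"
proof -
  assume "open J"
  then have "open (Im -` J)" by (intro open_vimage continuous_intros)
  moreover have "Im -` J = {w::complex. Im w \<in> J}" by auto
  ultimately show ?thesis by simp
qed

lemma poincare_strip:
  fixes \<phi> :: "complex \<Rightarrow> complex" and D\<phi> :: "complex \<Rightarrow> complex \<Rightarrow> complex"
  assumes J: "open J" "is_interval J" "v0 \<in> J"
  and der: "\<And>w. Im w \<in> J \<Longrightarrow> (\<phi> has_derivative D\<phi> w) (at w)"
  and c1: "continuous_on {w. Im w \<in> J} (\<lambda>w. D\<phi> w 1)"
  and c2: "continuous_on {w. Im w \<in> J} (\<lambda>w. D\<phi> w \<i>)"
  and cl: "\<And>w. Im w \<in> J \<Longrightarrow> Re (D\<phi> w \<i>) = Re (\<i> * D\<phi> w 1)"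
  shows "\<exists>F::complex \<Rightarrow> real. \<forall>w. Im w \<in> J \<longrightarrow> (F has_derivative (\<lambda>h. Re (\<phi> w * h))) (at w)"
proof -
  define T where "T = {w::complex. Im w \<in> J}"
  define C where "C = (\<lambda>x y::real. complex_of_real x + \<i> * complex_of_real y)"
  have CT: "C x y \<in> T \<longleftrightarrow> y \<in> J" for x y by (simp add: C_def T_def)
  have ReC[simp]: "Re (C x y) = x" "Im (C x y) = y" for x y by (simp_all add: C_def)
  have contC: "continuous_on A (\<lambda>p. C (fst p) (snd p))" for A
    unfolding C_def by (intro continuous_intros)
  define a where "a = (\<lambda>w. Re (\<phi> w))"
  define b where "b = (\<lambda>w. Re (\<i> * \<phi> w))"
  define au where "au = (\<lambda>w. Re (D\<phi> w 1))"
  define av where "av = (\<lambda>w. Re (D\<phi> w \<i>))"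
  define bu where "bu = (\<lambda>w. Re (\<i> * D\<phi> w 1))"
  have opT: "open T" unfolding T_def using J(1) by (rule open_strip)
  have contphi: "continuous_on T \<phi>"
  proof (rule has_derivative_continuous_on)
    fix x assume "x \<in> T"
    then have "Im x \<in> J" by (simp add: T_def)
    from has_derivative_at_withinI[OF der[OF this]]
    show "(\<phi> has_derivative D\<phi> x) (at x within T)" .
  qed
  have conta: "continuous_on T a" unfolding a_def by (intro continuous_intros contphi)
  have contb: "continuous_on T b" unfolding b_def by (intro continuous_intros contphi)
  have contav: "continuous_on T av" unfolding av_def T_def by (intro continuous_intros c2)
  have contbu: "continuous_on T bu" unfolding bu_def T_def by (intro continuous_intros c1)
  have da: "(a has_derivative (\<lambda>h. Re (D\<phi> w h))) (at w)" if "w \<in> T" for w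
  proof -
    have "Im w \<in> J" using that by (simp add: T_def)
    from der[OF this] show ?thesis unfolding a_def by (auto intro!: derivative_eq_intros)
  qed
  have db: "(b has_derivative (\<lambda>h. Re (\<i> * D\<phi> w h))) (at w)" if "w \<in> T" for w
  proof -
    have "Im w \<in> J" using that by (simp add: T_def)
    from der[OF this] show ?thesis unfolding b_def by (auto intro!: derivative_eq_intros)
  qed
  have a_v: "((\<lambda>t. a (C x t)) has_real_derivative av (C x t)) (at t)" if "t \<in> J" for x t
  proof -
    have "((\<lambda>t. a (complex_of_real x + \<i> * complex_of_real t)) has_real_derivative
           Re (D\<phi> (complex_of_real x + \<i> * complex_of_real t) \<i>)) (at t)"
      using line_v[OF da] that by (simp add: T_def)
    then show ?thesis by (simp add: C_def av_def)
  qed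
  have b_u: "((\<lambda>x. b (C x t)) has_real_derivative bu (C x t)) (at x)" if "t \<in> J" for x t
  proof -
    have "((\<lambda>x. b (\<i> * complex_of_real t + complex_of_real x)) has_real_derivative
           Re (\<i> * D\<phi> (\<i> * complex_of_real t + complex_of_real x) 1)) (at x)"
      using line_u[OF db] that by (simp add: T_def)
    then show ?thesis by (simp add: C_def bu_def add.commute)
  qed
  have avbu: "av w = bu w" if "w \<in> T" for w using cl that by (simp add: av_def bu_def T_def)
  have cont_line_v: "continuous_on J (\<lambda>t. g (C x t))" if "continuous_on T g" for g x
  proof -
    have "continuous_on J (\<lambda>t. C x t)" unfolding C_def by (intro continuous_intros)
    moreover have "(\<lambda>t. C x t) ` J \<subseteq> T" using CT by auto
    ultimately show ?thesis using continuous_on_compose2[OF that] by blast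
  qed
  have cont_line_u: "continuous_on UNIV (\<lambda>x. g (C x t))" if "continuous_on T g" "t \<in> J" for g t
  proof -
    have "continuous_on UNIV (\<lambda>x. C x t)" unfolding C_def by (intro continuous_intros)
    moreover have "(\<lambda>x. C x t) ` UNIV \<subseteq> T" using CT that(2) by auto
    ultimately show ?thesis using continuous_on_compose2[OF that(1)] by blast
  qed
  define H where "H = (\<lambda>x. sint (\<lambda>s. a (C s v0)) 0 x)"
  define G where "G = (\<lambda>x y. sint (\<lambda>t. b (C x t)) v0 y)"
  have dH: "(H has_real_derivative a (C x v0)) (at x)" for x
    unfolding H_def by (rule sint_deriv[OF open_UNIV is_interval_univ]) (auto intro: cont_line_u conta J)
  have dGy: "((\<lambda>y. G x y) has_real_derivative b (C x y)) (at y)" if "y \<in> J" for x y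
    unfolding G_def by (rule sint_deriv[OF J(1,2,3) that cont_line_v[OF contb]])
  have Ix: "((\<lambda>x. integral {p..q} (\<lambda>t. b (C x t))) has_real_derivative (a (C x q) - a (C x p))) (at x)"
    if pq: "p \<in> J" "q \<in> J" "p \<le> q" for p q x
  proof -
    have sub: "{p..q} \<subseteq> J" using J(2) pq unfolding is_interval_1 by (meson atLeastAtMost_iff subsetI)
    have L: "((\<lambda>x. integral (cbox p q) (\<lambda>t. b (C x t))) has_vector_derivative integral (cbox p q) (\<lambda>t. bu (C x t)))
       (at x within UNIV)"
    proof (rule leibniz_rule_vector_derivative)
      show "((\<lambda>x. b (C x t)) has_vector_derivative bu (C x t)) (at x within UNIV)"
        if "x \<in> UNIV" "t \<in> cbox p q" for x t
      proof -
        have "t \<in> J" using that sub by auto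
        from b_u[OF this, of x] show ?thesis
          by (simp add: has_real_derivative_iff_has_vector_derivative)
      qed
      show "(\<lambda>t. b (C x t)) integrable_on cbox p q" for x
      proof -
        have "continuous_on {p..q} (\<lambda>t. b (C x t))"
          by (rule continuous_on_subset[OF cont_line_v[OF contb] sub])
        then have "(\<lambda>t. b (C x t)) integrable_on {p..q}" by (rule integrable_continuous_real)
        then show ?thesis by simp
      qed
      have "continuous_on (UNIV \<times> cbox p q) (\<lambda>z. bu (C (fst z) (snd z)))"
      proof (rule continuous_on_compose2[OF contbu contC])
        show "(\<lambda>z. C (fst z) (snd z)) ` (UNIV \<times> cbox p q) \<subseteq> T" using sub CT by auto
      qed
      then show "continuous_on (UNIV \<times> cbox p q) (\<lambda>(x, t). bu (C x t))"
        by (simp add: case_prod_beta)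
      show "x \<in> UNIV" by simp
      show "convex (UNIV::real set)" by simp
    qed
    have "integral {p..q} (\<lambda>t. bu (C x t)) = a (C x q) - a (C x p)"
    proof -
      have "((\<lambda>t. av (C x t)) has_integral (a (C x q) - a (C x p))) {p..q}"
      proof (rule fundamental_theorem_of_calculus[OF pq(3)])
        fix t assume "t \<in> {p..q}"
        then have "t \<in> J" using sub by auto
        from a_v[OF this, of x] have "((\<lambda>t. a (C x t)) has_vector_derivative av (C x t)) (at t)"
          by (simp add: has_real_derivative_iff_has_vector_derivative)
        then show "((\<lambda>t. a (C x t)) has_vector_derivative av (C x t)) (at t within {p..q})"
          by (rule has_vector_derivative_at_within)
      qed
      then have "integral {p..q} (\<lambda>t. av (C x t)) = a (C x q) - a (C x p)" by (rule integral_unique)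
      moreover have "integral {p..q} (\<lambda>t. bu (C x t)) = integral {p..q} (\<lambda>t. av (C x t))"
      proof (rule integral_cong)
        fix t assume "t \<in> {p..q}"
        then have "C x t \<in> T" using sub CT by auto
        then show "bu (C x t) = av (C x t)" using avbu by simp
      qed
      ultimately show ?thesis by simp
    qed
    with L show ?thesis
      by (simp add: has_real_derivative_iff_has_vector_derivative)
  qed
  have dGx: "((\<lambda>x. G x y) has_real_derivative (a (C x y) - a (C x v0))) (at x)" if "y \<in> J" for x y
  proof (cases "v0 \<le> y")
    case True
    have "((\<lambda>x. integral {v0..y} (\<lambda>t. b (C x t))) has_real_derivative (a (C x y) - a (C x v0))) (at x)"
      using Ix[of v0 y x] True that J(3) by auto
    then show ?thesis using True by (simp add: G_def sint_def)
  next
    case False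
    have "((\<lambda>x. integral {y..v0} (\<lambda>t. b (C x t))) has_real_derivative (a (C x v0) - a (C x y))) (at x)"
      using Ix[of y v0 x] False that J(3) by auto
    from DERIV_minus[OF this] show ?thesis using False by (simp add: G_def sint_def)
  qed
  define f where "f = (\<lambda>x y. H x + G x y)"
  have fpart: "((\<lambda>(x, y). f x y) has_derivative (\<lambda>(tx, ty). tx * a (C x y) + ty * b (C x y))) (at (x, y))"
    if y: "y \<in> J" for x y
  proof -
    have "((\<lambda>(x, y). f x y) has_derivative
         (\<lambda>(tx, ty). tx * a (C x y) + blinfun_apply (blinfun_scaleR_left (b (C x y))) ty)) (at (x, y) within UNIV \<times> J)"
    proof (rule has_derivative_partialsI)
      have "((\<lambda>x. f x y) has_real_derivative (a (C x v0) + (a (C x y) - a (C x v0)))) (at x)"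
        unfolding f_def by (intro DERIV_add dH dGx y)
      then have "((\<lambda>x. f x y) has_derivative (\<lambda>tx. (a (C x v0) + (a (C x y) - a (C x v0))) * tx)) (at x)"
        by (simp add: has_field_derivative_def)
      then show "((\<lambda>x. f x y) has_derivative (\<lambda>tx. tx * a (C x y))) (at x within UNIV)"
        by (rule has_derivative_eq_rhs) (simp add: fun_eq_iff)
      show "((\<lambda>y. f x y) has_derivative blinfun_apply (blinfun_scaleR_left (b (C x y)))) (at y within J)"
        if "x \<in> UNIV" "y \<in> J" for x y
      proof -
        have "((\<lambda>y. f x y) has_real_derivative (0 + b (C x y))) (at y)"
          unfolding f_def by (intro DERIV_add DERIV_const dGy that)
        then have "((\<lambda>y. f x y) has_derivative (\<lambda>t. (0 + b (C x y)) * t)) (at y)"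
          by (simp add: has_field_derivative_def)
        then have "((\<lambda>y. f x y) has_derivative (\<lambda>t. t * b (C x y))) (at y)"
          by (rule has_derivative_eq_rhs) (simp add: fun_eq_iff)
        then show ?thesis by (auto intro: has_derivative_at_withinI)
      qed
      have "continuous_on (UNIV \<times> J) (\<lambda>z. b (C (fst z) (snd z)))"
      proof (rule continuous_on_compose2[OF contb contC])
        show "(\<lambda>z. C (fst z) (snd z)) ` (UNIV \<times> J) \<subseteq> T" using CT by auto
      qed
      then have cbl: "continuous_on (UNIV \<times> J) (\<lambda>z. blinfun_scaleR_left (b (C (fst z) (snd z))))"
        by (intro continuous_intros)
      then show "continuous (at (x, y) within UNIV \<times> J) (\<lambda>(x, y). blinfun_scaleR_left (b (C x y)))"
      proof -
        have eq: "(\<lambda>(x, y). blinfun_scaleR_left (b (C x y))) = (\<lambda>z. blinfun_scaleR_left (b (C (fst z) (snd z))))"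
          by (simp add: fun_eq_iff)
        show ?thesis unfolding eq using y cbl
          by (auto simp: continuous_on_eq_continuous_within)
      qed
    qed (use y J in \<open>auto intro: is_interval_convex\<close>)
    moreover have "at (x, y) within UNIV \<times> J = at (x, y)"
      using y J(1) by (intro at_within_open) (auto intro: open_Times)
    ultimately show ?thesis by (simp add: ac_simps)
  qed
  define F where "F = (\<lambda>w. f (Re w) (Im w))"
  have "(F has_derivative (\<lambda>h. Re (\<phi> w * h))) (at w)" if w: "Im w \<in> J" for w
  proof -
    have l: "((\<lambda>w. (Re w, Im w)) has_derivative (\<lambda>h. (Re h, Im h))) (at w)"
      by (intro derivative_eq_intros) auto
    have "((\<lambda>w. (\<lambda>(x, y). f x y) (Re w, Im w)) has_derivative
         (\<lambda>h. (\<lambda>(tx, ty). tx * a (C (Re w) (Im w)) + ty * b (C (Re w) (Im w))) (Re h, Im h))) (at w)"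
      using has_derivative_compose[OF l fpart[OF w]] by simp
    moreover have "C (Re w) (Im w) = w" by (simp add: C_def complex_eq_iff)
    ultimately have "(F has_derivative (\<lambda>h. Re h * a w + Im h * b w)) (at w)"
      by (simp add: F_def)
    then show ?thesis
      by (rule has_derivative_eq_rhs) (auto simp: fun_eq_iff a_def b_def algebra_simps)
  qed
  then show ?thesis by blast
qed



definition PL :: "complex set \<Rightarrow> bool" where
 "PL S \<longleftrightarrow> (\<forall>(\<phi>::complex \<Rightarrow> complex) D\<phi>. (\<forall>w\<in>S. (\<phi> has_derivative D\<phi> w) (at w)) \<and>
     continuous_on S (\<lambda>w. D\<phi> w 1) \<and> continuous_on S (\<lambda>w. D\<phi> w \<i>) \<and>
     (\<forall>w\<in>S. Re (D\<phi> w \<i>) = Re (\<i> * D\<phi> w 1)) \<longrightarrow>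
     (\<exists>F::complex \<Rightarrow> real. \<forall>w\<in>S. (F has_derivative (\<lambda>h. Re (\<phi> w * h))) (at w)))"

lemma PL_strip:
  assumes "open J" "is_interval J" "J \<noteq> {}"
  shows "PL {w. Im w \<in> J}"
  unfolding PL_def
proof (intro allI impI)
  fix \<phi> :: "complex \<Rightarrow> complex" and D\<phi>
  assume H: "(\<forall>w\<in>{w. Im w \<in> J}. (\<phi> has_derivative D\<phi> w) (at w)) \<and>
     continuous_on {w. Im w \<in> J} (\<lambda>w. D\<phi> w 1) \<and> continuous_on {w. Im w \<in> J} (\<lambda>w. D\<phi> w \<i>) \<and>
     (\<forall>w\<in>{w. Im w \<in> J}. Re (D\<phi> w \<i>) = Re (\<i> * D\<phi> w 1))"
  obtain v0 where "v0 \<in> J" using assms(3) by blast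
  from poincare_strip[OF assms(1,2) this, of \<phi> D\<phi>] H
  show "\<exists>F::complex \<Rightarrow> real. \<forall>w\<in>{w. Im w \<in> J}. (F has_derivative (\<lambda>h. Re (\<phi> w * h))) (at w)"
    by auto
qed

lemma closed_alg:
  assumes "Re B = Re (\<i> * A)"
  shows "Re ((Re (c * \<i>) *\<^sub>R A + Im (c * \<i>) *\<^sub>R B) * c + X * \<i>) =
         Re (\<i> * ((Re c *\<^sub>R A + Im c *\<^sub>R B) * c + X))"
  using assms by (simp add: algebra_simps scaleR_conv_of_real)

lemma PL_pullback:
  assumes PT: "PL T" and oT: "open T" and oS: "open S"
  and hk: "k holomorphic_on T" and kT: "k ` T \<subseteq> S"
  and hl: "l holomorphic_on S" and lS: "l ` S \<subseteq> T"
  and kl: "\<And>z. z \<in> S \<Longrightarrow> k (l z) = z"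
  shows "PL S"
  unfolding PL_def
proof (intro allI impI)
  fix \<phi> :: "complex \<Rightarrow> complex" and D\<phi>
  assume H: "(\<forall>w\<in>S. (\<phi> has_derivative D\<phi> w) (at w)) \<and>
     continuous_on S (\<lambda>w. D\<phi> w 1) \<and> continuous_on S (\<lambda>w. D\<phi> w \<i>) \<and>
     (\<forall>w\<in>S. Re (D\<phi> w \<i>) = Re (\<i> * D\<phi> w 1))"
  then have der: "\<And>w. w \<in> S \<Longrightarrow> (\<phi> has_derivative D\<phi> w) (at w)"
    and c1: "continuous_on S (\<lambda>w. D\<phi> w 1)" and c2: "continuous_on S (\<lambda>w. D\<phi> w \<i>)"
    and cl: "\<And>w. w \<in> S \<Longrightarrow> Re (D\<phi> w \<i>) = Re (\<i> * D\<phi> w 1)" by auto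
  define k1 where "k1 = deriv k"
  define k2 where "k2 = deriv (deriv k)"
  have hk1: "k1 holomorphic_on T" unfolding k1_def by (intro holomorphic_deriv hk oT)
  have hk2: "k2 holomorphic_on T" unfolding k2_def by (intro holomorphic_deriv hk oT)
  have dk: "(k has_field_derivative k1 w) (at w)" if "w \<in> T" for w
    unfolding k1_def using holomorphic_derivI[OF hk oT that] .
  have dk1: "(k1 has_field_derivative k2 w) (at w)" if "w \<in> T" for w
    unfolding k2_def k1_def using holomorphic_derivI[OF holomorphic_deriv[OF hk oT] oT that] .
  have ck: "continuous_on T k" by (rule holomorphic_on_imp_continuous_on[OF hk])
  have ck1: "continuous_on T k1" by (rule holomorphic_on_imp_continuous_on[OF hk1])
  have ck2: "continuous_on T k2" by (rule holomorphic_on_imp_continuous_on[OF hk2])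
  have cphi: "continuous_on S \<phi>"
  proof (rule has_derivative_continuous_on)
    fix x assume "x \<in> S"
    from has_derivative_at_withinI[OF der[OF this]]
    show "(\<phi> has_derivative D\<phi> x) (at x within S)" .
  qed
  have lin: "linear (D\<phi> w)" if "w \<in> S" for w using has_derivative_linear[OF der[OF that]] .
  define \<psi> where "\<psi> = (\<lambda>w. \<phi> (k w) * k1 w)"
  define D\<psi> where "D\<psi> = (\<lambda>w h. D\<phi> (k w) (k1 w * h) * k1 w + \<phi> (k w) * (k2 w * h))"
  have dpsi: "(\<psi> has_derivative D\<psi> w) (at w)" if w: "w \<in> T" for w
  proof -
    have kw: "k w \<in> S" using kT w by auto
    have d1: "(k has_derivative (\<lambda>h. k1 w * h)) (at w)"
      using dk[OF w] unfolding has_field_derivative_def .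
    have d2: "((\<lambda>w. \<phi> (k w)) has_derivative (\<lambda>h. D\<phi> (k w) (k1 w * h))) (at w)"
      using has_derivative_compose[OF d1 der[OF kw]] .
    have d3: "(k1 has_derivative (\<lambda>h. k2 w * h)) (at w)"
      using dk1[OF w] unfolding has_field_derivative_def .
    have "(\<psi> has_derivative (\<lambda>h. \<phi> (k w) * (k2 w * h) + D\<phi> (k w) (k1 w * h) * k1 w)) (at w)"
      unfolding \<psi>_def using has_derivative_mult[OF d2 d3] by simp
    then show ?thesis
      by (rule has_derivative_eq_rhs) (simp add: D\<psi>_def fun_eq_iff)
  qed
  have Dpsi_eq: "D\<psi> w h = (Re (k1 w * h) *\<^sub>R D\<phi> (k w) 1 + Im (k1 w * h) *\<^sub>R D\<phi> (k w) \<i>) * k1 w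
      + \<phi> (k w) * (k2 w * h)" if w: "w \<in> T" for w h
  proof -
    have kw: "k w \<in> S" using kT w by auto
    show ?thesis unfolding D\<psi>_def using lin_decomp[OF lin[OF kw], of "k1 w * h"] by simp
  qed
  have cA: "continuous_on T (\<lambda>w. D\<phi> (k w) 1)"
    by (rule continuous_on_compose2[OF c1 ck kT])
  have cB: "continuous_on T (\<lambda>w. D\<phi> (k w) \<i>)"
    by (rule continuous_on_compose2[OF c2 ck kT])
  have cP: "continuous_on T (\<lambda>w. \<phi> (k w))"
    by (rule continuous_on_compose2[OF cphi ck kT])
  have cont_h: "continuous_on T (\<lambda>w. D\<psi> w h)" for h
  proof -
    have "continuous_on T (\<lambda>w. (Re (k1 w * h) *\<^sub>R D\<phi> (k w) 1 + Im (k1 w * h) *\<^sub>R D\<phi> (k w) \<i>) * k1 w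
      + \<phi> (k w) * (k2 w * h))"
      by (intro continuous_intros cA cB cP ck1 ck2)
    then show ?thesis by (rule continuous_on_eq) (simp add: Dpsi_eq)
  qed
  have clpsi: "Re (D\<psi> w \<i>) = Re (\<i> * D\<psi> w 1)" if w: "w \<in> T" for w
  proof -
    have kw: "k w \<in> S" using kT w by auto
    show ?thesis unfolding Dpsi_eq[OF w]
      using closed_alg[OF cl[OF kw], of "k1 w" "\<phi> (k w) * k2 w"] by (simp add: ac_simps)
  qed
  obtain F where F: "\<And>w. w \<in> T \<Longrightarrow> (F has_derivative (\<lambda>h. Re (\<psi> w * h))) (at w)"
    using PT unfolding PL_def using dpsi cont_h clpsi by blast
  define l1 where "l1 = deriv l"
  have dl: "(l has_field_derivative l1 z) (at z)" if "z \<in> S" for z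
    unfolding l1_def using holomorphic_derivI[OF hl oS that] .
  have kl1: "k1 (l z) * l1 z = 1" if z: "z \<in> S" for z
  proof -
    have lz: "l z \<in> T" using lS z by auto
    have "((\<lambda>z. k (l z)) has_field_derivative k1 (l z) * l1 z) (at z)"
      using DERIV_chain2[OF dk[OF lz] dl[OF z]] .
    moreover have "((\<lambda>z. k (l z)) has_field_derivative 1) (at z)"
      by (rule has_field_derivative_transform_within_open[OF DERIV_ident oS z]) (simp add: kl)
    ultimately show ?thesis by (rule DERIV_unique)
  qed
  have "((\<lambda>z. F (l z)) has_derivative (\<lambda>h. Re (\<phi> z * h))) (at z)" if z: "z \<in> S" for z
  proof -
    have lz: "l z \<in> T" using lS z by auto
    have d1: "(l has_derivative (\<lambda>h. l1 z * h)) (at z)"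
      using dl[OF z] unfolding has_field_derivative_def .
    have "((\<lambda>z. F (l z)) has_derivative (\<lambda>h. Re (\<psi> (l z) * (l1 z * h)))) (at z)"
      using has_derivative_compose[OF d1 F[OF lz]] .
    moreover have "\<psi> (l z) * (l1 z * h) = \<phi> z * h" for h
    proof -
      have "\<psi> (l z) * (l1 z * h) = \<phi> (k (l z)) * (k1 (l z) * l1 z) * h"
        by (simp add: \<psi>_def ac_simps)
      also have "\<dots> = \<phi> z * h" using kl1[OF z] kl[OF z] by simp
      finally show ?thesis .
    qed
    ultimately show ?thesis by simp
  qed
  then show "\<exists>F::complex \<Rightarrow> real. \<forall>w\<in>S. (F has_derivative (\<lambda>h. Re (\<phi> w * h))) (at w)"
    by blast
qed



lemma cayley_in:
  fixes w :: complex
  assumes "Im w > 0"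
  shows "cmod ((w - \<i>) / (w + \<i>)) < 1"
proof -
  have nz: "w + \<i> \<noteq> 0" using assms by (auto simp: complex_eq_iff)
  have "(cmod (w - \<i>))\<^sup>2 < (cmod (w + \<i>))\<^sup>2"
    using assms unfolding cmod_power2 by (simp add: power2_eq_square algebra_simps)
  then have "cmod (w - \<i>) < cmod (w + \<i>)"
    by (rule power_less_imp_less_base) simp
  then show ?thesis using nz by (simp add: norm_divide divide_less_eq)
qed

lemma cayley_inv_in:
  fixes z :: complex
  assumes "cmod z < 1"
  shows "Im (\<i> * (1 + z) / (1 - z)) > 0"
proof -
  have "(cmod z)\<^sup>2 < 1" using assms by (simp add: power_less_one_iff abs_less_iff) 
  then have z2: "(Re z)\<^sup>2 + (Im z)\<^sup>2 < 1" by (simp add: cmod_power2)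
  have nz: "z \<noteq> 1" using assms by auto
  then have den: "(Re (1 - z))\<^sup>2 + (Im (1 - z))\<^sup>2 > 0"
    by (metis cmod_power2 right_minus_eq zero_less_norm_iff zero_less_power)
  have num: "Im (\<i> * (1 + z)) * Re (1 - z) - Re (\<i> * (1 + z)) * Im (1 - z) > 0"
    using z2 by (simp add: power2_eq_square algebra_simps)
  show ?thesis unfolding Im_divide using num den by simp
qed

lemma cayley_inv:
  fixes z :: complex
  assumes "z \<noteq> 1"
  shows "(\<i> * (1 + z) / (1 - z) - \<i>) / (\<i> * (1 + z) / (1 - z) + \<i>) = z"
proof -
  have nz: "1 - z \<noteq> 0" using assms by simp
  have a: "\<i> * (1 + z) / (1 - z) - \<i> = 2 * \<i> * z / (1 - z)" using nz by (simp add: field_simps)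
  have b: "\<i> * (1 + z) / (1 - z) + \<i> = 2 * \<i> / (1 - z)" using nz by (simp add: field_simps)
  show ?thesis unfolding a b using nz by (simp add: field_simps)
qed

lemma PL_sc:
  assumes oS: "open S" and sc: "simply_connected S"
  shows "PL S"
proof -
  have "S = {} \<or> S = UNIV \<or>
           (\<exists>f g. f holomorphic_on S \<and> g holomorphic_on ball 0 1 \<and>
                 (\<forall>z \<in> S. f z \<in> ball 0 1 \<and> g(f z) = z) \<and>
                 (\<forall>z \<in> ball 0 1. g z \<in> S \<and> f(g z) = z))"
    using simply_connected_eq_biholomorphic_to_disc[OF oS] sc by blast
  moreover have "PL {}" unfolding PL_def by auto
  moreover have "PL UNIV"
  proof -
    have "PL {w. Im w \<in> (UNIV::real set)}" by (rule PL_strip) auto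
    then show ?thesis by simp
  qed
  moreover have "PL S" if ex: "\<exists>f g. f holomorphic_on S \<and> g holomorphic_on ball 0 1 \<and>
                 (\<forall>z \<in> S. f z \<in> ball 0 1 \<and> g(f z) = z) \<and>
                 (\<forall>z \<in> ball 0 1. g z \<in> S \<and> f(g z) = z)"
  proof -
    obtain f g where fg: "f holomorphic_on S" "g holomorphic_on ball 0 1"
      "\<And>z. z \<in> S \<Longrightarrow> f z \<in> ball 0 1" "\<And>z. z \<in> S \<Longrightarrow> g (f z) = z"
      "\<And>z. z \<in> ball 0 1 \<Longrightarrow> g z \<in> S"
      using ex by blast
    define H where "H = {w::complex. Im w \<in> {0<..}}"
    have PH: "PL H" unfolding H_def by (rule PL_strip) auto
    have oH: "open H" unfolding H_def by (rule open_strip) simp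
    define Ca where "Ca = (\<lambda>w::complex. (w - \<i>) / (w + \<i>))"
    define Ci where "Ci = (\<lambda>z::complex. \<i> * (1 + z) / (1 - z))"
    have CaH: "Ca ` H \<subseteq> ball 0 1" using cayley_in by (auto simp: Ca_def H_def)
    have CiB: "Ci ` ball 0 1 \<subseteq> H" using cayley_inv_in by (auto simp: Ci_def H_def)
    have hCa: "Ca holomorphic_on H"
      unfolding Ca_def H_def by (intro holomorphic_intros) (auto simp: complex_eq_iff)
    have hCi: "Ci holomorphic_on ball 0 1"
      unfolding Ci_def by (intro holomorphic_intros) auto
    show "PL S"
    proof (rule PL_pullback[OF PH oH oS])
      show "(\<lambda>w. g (Ca w)) holomorphic_on H"
        using holomorphic_on_compose_gen[OF hCa fg(2) CaH] by (simp add: o_def)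
      show "(\<lambda>w. g (Ca w)) ` H \<subseteq> S" using CaH fg(5) by auto
      have "f ` S \<subseteq> ball 0 1" using fg(3) by blast
      from holomorphic_on_compose_gen[OF fg(1) hCi this]
      show "(\<lambda>z. Ci (f z)) holomorphic_on S" by (simp add: o_def)
      show "(\<lambda>z. Ci (f z)) ` S \<subseteq> H" using CiB fg(3) by auto
      show "g (Ca (Ci (f z))) = z" if "z \<in> S" for z
      proof -
        have "f z \<noteq> 1" using fg(3)[OF that] by auto
        then have "Ca (Ci (f z)) = f z" unfolding Ca_def Ci_def by (rule cayley_inv)
        then show ?thesis using fg(4)[OF that] by simp
      qed
    qed
  qed
  ultimately show ?thesis by blast
qed



lemma vector_4 [simp]:
 "(vector [x,y,z,w] ::('a::zero)^4)$1 = x"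
 "(vector [x,y,z,w] ::('a::zero)^4)$2 = y"
 "(vector [x,y,z,w] ::('a::zero)^4)$3 = z"
 "(vector [x,y,z,w] ::('a::zero)^4)$4 = w"
  unfolding vector_def by simp_all

lemma vec4_eq_iff: "(x::'a^4) = y \<longleftrightarrow> x$1 = y$1 \<and> x$2 = y$2 \<and> x$3 = y$3 \<and> x$4 = y$4"
  by (simp add: vec_eq_iff forall_4)

lemma vec_has_derivative:
  fixes f :: "'a::euclidean_space \<Rightarrow> 'n::finite \<Rightarrow> 'b::real_normed_vector"
  assumes d: "\<And>i. ((\<lambda>x. f x i) has_derivative f' i) (at z)"
  shows "((\<lambda>x. \<chi> i. f x i) has_derivative (\<lambda>h. \<chi> i. f' i h)) (at z)"
proof -
  have lin: "linear (\<lambda>h. \<chi> i. f' i h)"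
  proof (rule linearI)
    fix x y show "(\<chi> i. f' i (x + y)) = (\<chi> i. f' i x) + (\<chi> i. f' i y)"
      using linear_add[OF has_derivative_linear[OF d]] by (simp add: vec_eq_iff)
    fix c :: real show "(\<chi> i. f' i (c *\<^sub>R x)) = c *\<^sub>R (\<chi> i. f' i x)"
      using linear_scale[OF has_derivative_linear[OF d]] by (simp add: vec_eq_iff)
  qed
  then have bl: "bounded_linear (\<lambda>h. \<chi> i. f' i h)" by (simp add: linear_conv_bounded_linear)
  have "((\<lambda>y. (\<chi> i. (f y i - f z i - f' i (y - z)) /\<^sub>R norm (y - z))) \<longlongrightarrow> (\<chi> i. 0)) (at z)"
  proof (rule tendsto_vec_lambda)
    fix i show "((\<lambda>y. (f y i - f z i - f' i (y - z)) /\<^sub>R norm (y - z)) \<longlongrightarrow> 0) (at z)"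
      using d[of i] unfolding has_derivative_at_within by simp
  qed
  moreover have "(\<chi> i. (f y i - f z i - f' i (y - z)) /\<^sub>R norm (y - z)) =
       ((\<chi> i. f y i) - (\<chi> i. f z i) - (\<chi> i. f' i (y - z))) /\<^sub>R norm (y - z)" for y
    by (simp add: vec_eq_iff)
  ultimately show ?thesis unfolding has_derivative_at_within using bl
    by (simp add: zero_vec_def[symmetric])
qed



definition dzf :: "(complex \<Rightarrow> real) \<Rightarrow> complex \<Rightarrow> complex" where
  "dzf f w = (complex_of_real (pu f w) - \<i> * complex_of_real (pv f w)) / 2"

definition Ddz :: "(complex \<Rightarrow> real) \<Rightarrow> complex \<Rightarrow> complex \<Rightarrow> complex" where
  "Ddz f w h = (complex_of_real (Re h * pu (pu f) w + Im h * pv (pu f) w)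
      - \<i> * complex_of_real (Re h * pu (pv f) w + Im h * pv (pv f) w)) / 2"

lemma cfun_deriv:
  assumes "C1_on S f" "z \<in> S"
  shows "(cfun f has_derivative (\<lambda>h. complex_of_real (Re h * pu f z + Im h * pv f z))) (at z)"
proof -
  have "((\<lambda>w. complex_of_real (f w)) has_derivative (\<lambda>h. complex_of_real (Re h *\<^sub>R pu f z + Im h *\<^sub>R pv f z))) (at z)"
    using has_derivative_compose[OF C1_deriv[OF assms] bounded_linear.has_derivative[OF bounded_linear_of_real has_derivative_ident]]
    by simp
  then show ?thesis by (simp add: cfun_def)
qed

lemma Dz_cfun:
  assumes "C1_on S f" "z \<in> S"
  shows "Dz (cfun f) z = dzf f z"
  unfolding Dz_def dzf_def pu_eq[OF cfun_deriv[OF assms]] pv_eq[OF cfun_deriv[OF assms]] by simp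

lemma dzf_deriv:
  assumes "C2_on S f" "z \<in> S"
  shows "(dzf f has_derivative Ddz f z) (at z)"
proof -
  have a: "(pu f has_derivative (\<lambda>h. Re h *\<^sub>R pu (pu f) z + Im h *\<^sub>R pv (pu f) z)) (at z)"
    using C1_deriv[OF C2_parts(2)[OF assms(1)] assms(2)] .
  have b: "(pv f has_derivative (\<lambda>h. Re h *\<^sub>R pu (pv f) z + Im h *\<^sub>R pv (pv f) z)) (at z)"
    using C1_deriv[OF C2_parts(3)[OF assms(1)] assms(2)] .
  have "((\<lambda>w. (complex_of_real (pu f w) - \<i> * complex_of_real (pv f w)) / 2) has_derivative
     (\<lambda>h. (complex_of_real (Re h *\<^sub>R pu (pu f) z + Im h *\<^sub>R pv (pu f) z)
      - \<i> * complex_of_real (Re h *\<^sub>R pu (pv f) z + Im h *\<^sub>R pv (pv f) z)) / 2)) (at z)"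
  proof -
    have a': "((\<lambda>w. complex_of_real (pu f w)) has_derivative (\<lambda>h. complex_of_real (Re h *\<^sub>R pu (pu f) z + Im h *\<^sub>R pv (pu f) z))) (at z)"
      using has_derivative_compose[OF a bounded_linear.has_derivative[OF bounded_linear_of_real has_derivative_ident]] by simp
    have b': "((\<lambda>w. complex_of_real (pv f w)) has_derivative (\<lambda>h. complex_of_real (Re h *\<^sub>R pu (pv f) z + Im h *\<^sub>R pv (pv f) z))) (at z)"
      using has_derivative_compose[OF b bounded_linear.has_derivative[OF bounded_linear_of_real has_derivative_ident]] by simp
    have "((\<lambda>w. complex_of_real (pu f w) - \<i> * complex_of_real (pv f w)) has_derivative
     (\<lambda>h. complex_of_real (Re h *\<^sub>R pu (pu f) z + Im h *\<^sub>R pv (pu f) z)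
      - \<i> * complex_of_real (Re h *\<^sub>R pu (pv f) z + Im h *\<^sub>R pv (pv f) z))) (at z)"
      by (rule has_derivative_diff[OF a' has_derivative_mult_right[OF b']])
    from bounded_linear.has_derivative[OF bounded_linear_divide[of 2] this] show ?thesis by simp
  qed
  then show ?thesis unfolding dzf_def Ddz_def by simp
qed

lemma Dz_deriv:
  assumes "open S" "C2_on S f" "z \<in> S"
  shows "(Dz (cfun f) has_derivative Ddz f z) (at z)"
proof (rule has_derivative_transform_within_open[OF dzf_deriv[OF assms(2,3)] assms(1,3)])
  fix x assume "x \<in> S"
  then show "dzf f x = Dz (cfun f) x" using Dz_cfun[OF C2_parts(1)[OF assms(2)]] by simp
qed

lemma Dzb_eq:
  assumes "(F has_derivative DF) (at z)"
  shows "Dzb F z = (DF 1 + \<i> * DF \<i>) / 2"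
  unfolding Dzb_def pu_eq[OF assms] pv_eq[OF assms] ..

lemma Dz_eq:
  assumes "(F has_derivative DF) (at z)"
  shows "Dz F z = (DF 1 - \<i> * DF \<i>) / 2"
  unfolding Dz_def pu_eq[OF assms] pv_eq[OF assms] ..

lemma Dzb_Dz_real:
  assumes "open S" "C2_on S f" "z \<in> S"
  shows "Dzb (Dz (cfun f)) z = complex_of_real ((pu (pu f) z + pv (pv f) z) / 4)"
proof -
  have s: "pv (pu f) z = pu (pv f) z" by (rule schwarz[OF assms(1,3,2)])
  show ?thesis unfolding Dzb_eq[OF Dz_deriv[OF assms]] Ddz_def using s
    by (simp add: complex_eq_iff field_simps)
qed

lemma Ddz_cont:
  assumes "C2_on S f"
  shows "continuous_on S (\<lambda>w. Ddz f w h)"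
proof -
  have c: "continuous_on S (pu (pu f))" "continuous_on S (pv (pu f))"
          "continuous_on S (pu (pv f))" "continuous_on S (pv (pv f))"
    using C2_parts(2,3)[OF assms] unfolding C1_on_def by auto
  show ?thesis unfolding Ddz_def by (intro continuous_intros c) auto
qed

lemma Dz_cont:
  assumes "C2_on S f"
  shows "continuous_on S (Dz (cfun f))"
proof -
  have c: "continuous_on S (pu f)" "continuous_on S (pv f)"
    using C2_parts(1)[OF assms] unfolding C1_on_def by auto
  have "continuous_on S (dzf f)" unfolding dzf_def by (intro continuous_intros c) auto
  then show ?thesis
    by (rule continuous_on_eq) (use Dz_cfun[OF C2_parts(1)[OF assms]] in simp)
qed



lemma closed_from_Im: "Im (A + \<i> * B) = 0 \<Longrightarrow> Re B = Re (\<i> * A)"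
  by simp

lemma wdata:
  assumes "weierstrass_first_kind S g P Q"
  shows "g holomorphic_on S" "\<And>z. z \<in> S \<Longrightarrow> g z \<noteq> 0" "C2_on S P" "C2_on S Q"
    "\<And>z. z \<in> S \<Longrightarrow> Dzb (Dz (cfun P)) z = complex_of_real ((cmod (g z))\<^sup>2) * Dzb (Dz (cfun Q)) z"
    "\<And>z. z \<in> S \<Longrightarrow> Dz (cfun P) z - complex_of_real ((cmod (g z))\<^sup>2) * Dz (cfun Q) z \<noteq> 0"
  using assms unfolding weierstrass_first_kind_def by auto

lemma exist_xs:
  assumes oS: "open S" and sc: "simply_connected S" and W: "weierstrass_first_kind S g P Q"
  shows "\<exists>x1 x2 :: complex \<Rightarrow> real. \<forall>z\<in>S.
     (x1 has_derivative (\<lambda>h. Re (2 * (Dz (cfun P) z / g z + Dz (cfun Q) z * g z) * h))) (at z) \<and>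
     (x2 has_derivative (\<lambda>h. Re (2 * (\<i> * Dz (cfun P) z / g z - \<i> * Dz (cfun Q) z * g z) * h))) (at z)"
proof -
  note wd = wdata[OF W]
  define p where "p = Dz (cfun P)"
  define q where "q = Dz (cfun Q)"
  define gi where "gi = (\<lambda>w. 1 / g w)"
  define g1 where "g1 = deriv g"
  define gi1 where "gi1 = deriv gi"
  have hg: "g holomorphic_on S" by (rule wd(1))
  have hgi: "gi holomorphic_on S" unfolding gi_def using wd(2) by (intro holomorphic_intros hg) auto
  have hg1: "g1 holomorphic_on S" unfolding g1_def by (intro holomorphic_deriv hg oS)
  have hgi1: "gi1 holomorphic_on S" unfolding gi1_def by (intro holomorphic_deriv hgi oS)
  have dg: "(g has_derivative (\<lambda>h. g1 w * h)) (at w)" if "w \<in> S" for w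
    using holomorphic_derivI[OF hg oS that] unfolding g1_def has_field_derivative_def .
  have dgi: "(gi has_derivative (\<lambda>h. gi1 w * h)) (at w)" if "w \<in> S" for w
    using holomorphic_derivI[OF hgi oS that] unfolding gi1_def has_field_derivative_def .
  have cg: "continuous_on S g" "continuous_on S gi" "continuous_on S g1" "continuous_on S gi1"
    using hg hgi hg1 hgi1 by (auto intro: holomorphic_on_imp_continuous_on)
  have cpq: "continuous_on S p" "continuous_on S q"
    unfolding p_def q_def using Dz_cont wd(3,4) by auto
  have dp: "(p has_derivative Ddz P w) (at w)" if "w \<in> S" for w
    unfolding p_def using Dz_deriv[OF oS wd(3) that] .
  have dq: "(q has_derivative Ddz Q w) (at w)" if "w \<in> S" for w
    unfolding q_def using Dz_deriv[OF oS wd(4) that] .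
  define r where "r = (\<lambda>w. (pu (pu Q) w + pv (pv Q) w) / 4)"
  have zbq: "Ddz Q w 1 + \<i> * Ddz Q w \<i> = 2 * complex_of_real (r w)" if "w \<in> S" for w
    using Dzb_Dz_real[OF oS wd(4) that] Dzb_eq[OF Dz_deriv[OF oS wd(4) that]] by (simp add: r_def)
  have zbp: "Ddz P w 1 + \<i> * Ddz P w \<i> = 2 * complex_of_real ((cmod (g w))\<^sup>2) * complex_of_real (r w)"
    if "w \<in> S" for w
    using wd(5)[OF that] Dzb_eq[OF Dz_deriv[OF oS wd(3) that]] Dzb_eq[OF Dz_deriv[OF oS wd(4) that]] zbq[OF that]
    by (simp add: field_simps)
  have gg: "complex_of_real ((cmod (g w))\<^sup>2) * gi w = cnj (g w)" if "w \<in> S" for w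
  proof -
    have "complex_of_real ((cmod (g w))\<^sup>2) = g w * cnj (g w)" by (rule complex_norm_square)
    then show ?thesis using wd(2)[OF that] unfolding gi_def by simp
  qed
  define \<phi>1 where "\<phi>1 = (\<lambda>w. 2 * (p w * gi w + q w * g w))"
  define D1 where "D1 = (\<lambda>w h. 2 * (p w * (gi1 w * h) + Ddz P w h * gi w + (q w * (g1 w * h) + Ddz Q w h * g w)))"
  have d1: "(\<phi>1 has_derivative D1 w) (at w)" if "w \<in> S" for w
  proof -
    have "((\<lambda>w. p w * gi w + q w * g w) has_derivative
        (\<lambda>h. p w * (gi1 w * h) + Ddz P w h * gi w + (q w * (g1 w * h) + Ddz Q w h * g w))) (at w)"
      by (intro has_derivative_add has_derivative_mult dp dq dg dgi that)
    from has_derivative_mult_right[OF this, of 2] show ?thesis unfolding \<phi>1_def D1_def .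
  qed
  have PL1: "PL S" by (rule PL_sc[OF oS sc])
  obtain x1 :: "complex \<Rightarrow> real" where x1: "\<And>w. w \<in> S \<Longrightarrow> (x1 has_derivative (\<lambda>h. Re (\<phi>1 w * h))) (at w)"
  proof -
    have "\<exists>F::complex \<Rightarrow> real. \<forall>w\<in>S. (F has_derivative (\<lambda>h. Re (\<phi>1 w * h))) (at w)"
    proof (rule PL1[unfolded PL_def, rule_format, of \<phi>1 D1], intro conjI ballI)
      show "(\<phi>1 has_derivative D1 w) (at w)" if "w \<in> S" for w using d1[OF that] .
      show "continuous_on S (\<lambda>w. D1 w 1)" unfolding D1_def
        by (intro continuous_intros cg cpq Ddz_cont wd(3,4))
      show "continuous_on S (\<lambda>w. D1 w \<i>)" unfolding D1_def
        by (intro continuous_intros cg cpq Ddz_cont wd(3,4))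
      show "Re (D1 w \<i>) = Re (\<i> * D1 w 1)" if w: "w \<in> S" for w
      proof (rule closed_from_Im)
        have "D1 w 1 + \<i> * D1 w \<i> = 2 * ((Ddz P w 1 + \<i> * Ddz P w \<i>) * gi w + (Ddz Q w 1 + \<i> * Ddz Q w \<i>) * g w)"
          unfolding D1_def by (simp add: algebra_simps)
        also have "\<dots> = 4 * complex_of_real (r w) * (cnj (g w) + g w)"
          unfolding zbp[OF w] zbq[OF w] using gg[OF w] by (simp add: algebra_simps)
        finally show "Im (D1 w 1 + \<i> * D1 w \<i>) = 0" by simp
      qed
    qed
    then show ?thesis using that by blast
  qed
  define \<phi>2 where "\<phi>2 = (\<lambda>w. 2 * (\<i> * (p w * gi w) - \<i> * (q w * g w)))"
  define D2 where "D2 = (\<lambda>w h. 2 * (\<i> * (p w * (gi1 w * h) + Ddz P w h * gi w) - \<i> * (q w * (g1 w * h) + Ddz Q w h * g w)))"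
  have d2: "(\<phi>2 has_derivative D2 w) (at w)" if "w \<in> S" for w
  proof -
    have "((\<lambda>w. \<i> * (p w * gi w) - \<i> * (q w * g w)) has_derivative
        (\<lambda>h. \<i> * (p w * (gi1 w * h) + Ddz P w h * gi w) - \<i> * (q w * (g1 w * h) + Ddz Q w h * g w))) (at w)"
      by (intro has_derivative_diff has_derivative_mult_right has_derivative_mult dp dq dg dgi that)
    from has_derivative_mult_right[OF this, of 2] show ?thesis unfolding \<phi>2_def D2_def .
  qed
  obtain x2 :: "complex \<Rightarrow> real" where x2: "\<And>w. w \<in> S \<Longrightarrow> (x2 has_derivative (\<lambda>h. Re (\<phi>2 w * h))) (at w)"
  proof -
    have "\<exists>F::complex \<Rightarrow> real. \<forall>w\<in>S. (F has_derivative (\<lambda>h. Re (\<phi>2 w * h))) (at w)"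
    proof (rule PL1[unfolded PL_def, rule_format, of \<phi>2 D2], intro conjI ballI)
      show "(\<phi>2 has_derivative D2 w) (at w)" if "w \<in> S" for w using d2[OF that] .
      show "continuous_on S (\<lambda>w. D2 w 1)" unfolding D2_def
        by (intro continuous_intros cg cpq Ddz_cont wd(3,4))
      show "continuous_on S (\<lambda>w. D2 w \<i>)" unfolding D2_def
        by (intro continuous_intros cg cpq Ddz_cont wd(3,4))
      show "Re (D2 w \<i>) = Re (\<i> * D2 w 1)" if w: "w \<in> S" for w
      proof (rule closed_from_Im)
        have "D2 w 1 + \<i> * D2 w \<i> = 2 * \<i> * ((Ddz P w 1 + \<i> * Ddz P w \<i>) * gi w - (Ddz Q w 1 + \<i> * Ddz Q w \<i>) * g w)"
          unfolding D2_def by (simp add: algebra_simps)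
        also have "\<dots> = 4 * \<i> * complex_of_real (r w) * (cnj (g w) - g w)"
          unfolding zbp[OF w] zbq[OF w] using gg[OF w] by (simp add: algebra_simps)
        finally show "Im (D2 w 1 + \<i> * D2 w \<i>) = 0" by simp
      qed
    qed
    then show ?thesis using that by blast
  qed
  show ?thesis
  proof (intro exI ballI conjI)
    fix z assume z: "z \<in> S"
    have e1: "\<phi>1 z = 2 * (Dz (cfun P) z / g z + Dz (cfun Q) z * g z)"
      by (simp add: \<phi>1_def p_def q_def gi_def)
    have e2: "\<phi>2 z = 2 * (\<i> * Dz (cfun P) z / g z - \<i> * Dz (cfun Q) z * g z)"
      by (simp add: \<phi>2_def p_def q_def gi_def)
    show "(x1 has_derivative (\<lambda>h. Re (2 * (Dz (cfun P) z / g z + Dz (cfun Q) z * g z) * h))) (at z)"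
      using x1[OF z] unfolding e1 .
    show "(x2 has_derivative (\<lambda>h. Re (2 * (\<i> * Dz (cfun P) z / g z - \<i> * Dz (cfun Q) z * g z) * h))) (at z)"
      using x2[OF z] unfolding e2 .
  qed
qed



lemma lor_vec4: "lor (vector [a1,a2,a3,a4]) (vector [b1,b2,b3,b4]) = a1*b1 + a2*b2 + a3*b3 - a4*b4"
  by (simp add: lor_def)

lemma alg_GG:
  fixes g :: complex
  shows "complex_of_real (2 * Re g) * complex_of_real (2 * Re g) + complex_of_real (2 * Im g) * complex_of_real (2 * Im g)
   + complex_of_real (-1 + (cmod g)\<^sup>2) * complex_of_real (-1 + (cmod g)\<^sup>2)
   - complex_of_real (1 + (cmod g)\<^sup>2) * complex_of_real (1 + (cmod g)\<^sup>2) = 0"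
proof -
  have "(2 * Re g) * (2 * Re g) + (2 * Im g) * (2 * Im g) + (-1 + (cmod g)\<^sup>2) * (-1 + (cmod g)\<^sup>2)
     - (1 + (cmod g)\<^sup>2) * (1 + (cmod g)\<^sup>2) = 0"
    unfolding cmod_power2 by (simp add: algebra_simps power2_eq_square)
  then have "complex_of_real ((2 * Re g) * (2 * Re g) + (2 * Im g) * (2 * Im g) + (-1 + (cmod g)\<^sup>2) * (-1 + (cmod g)\<^sup>2)
     - (1 + (cmod g)\<^sup>2) * (1 + (cmod g)\<^sup>2)) = 0" by simp
  then show ?thesis by (simp only: of_real_add of_real_mult of_real_diff)
qed

lemma alg_XG:
  fixes g p q :: complex
  assumes "g \<noteq> 0"
  shows "(p * (1 / g) + q * g) * complex_of_real (2 * Re g) + (p * (\<i> / g) + q * (- \<i> * g)) * complex_of_real (2 * Im g)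
   + (p * 1 + q * (-1)) * complex_of_real (-1 + (cmod g)\<^sup>2)
   - (p * 1 + q * 1) * complex_of_real (1 + (cmod g)\<^sup>2) = 0"
proof -
  have n: "complex_of_real ((cmod g)\<^sup>2) = g * cnj g" by (rule complex_norm_square)
  have n1: "complex_of_real (-1 + (cmod g)\<^sup>2) = -1 + g * cnj g" by (simp only: of_real_add of_real_minus of_real_1 n)
  have n2: "complex_of_real (1 + (cmod g)\<^sup>2) = 1 + g * cnj g" by (simp only: of_real_add of_real_1 n)
  have r: "complex_of_real (2 * Re g) = g + cnj g" by (simp add: complex_eq_iff)
  have i: "complex_of_real (2 * Im g) = - \<i> * (g - cnj g)" by (simp add: complex_eq_iff)
  have "(p * (1 / g) + q * g) * (g + cnj g) + (p * (\<i> / g) + q * (- \<i> * g)) * (- \<i> * (g - cnj g))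
   + (p * 1 + q * (-1)) * (-1 + g * cnj g) - (p * 1 + q * 1) * (1 + g * cnj g) = 0"
    using assms by (simp add: field_simps)
  then show ?thesis unfolding r i n1 n2 .
qed

lemma alg_XX:
  fixes g p q :: complex
  assumes "g \<noteq> 0"
  shows "(p * (1 / g) + q * g) * (p * (1 / g) + q * g) + (p * (\<i> / g) + q * (- \<i> * g)) * (p * (\<i> / g) + q * (- \<i> * g))
   + (p * 1 + q * (-1)) * (p * 1 + q * (-1)) - (p * 1 + q * 1) * (p * 1 + q * 1) = 0"
proof -
  define u where "u = p / g"
  define v where "v = q * g"
  have a: "p * (1 / g) + q * g = u + v" by (simp add: u_def v_def)
  have b: "p * (\<i> / g) + q * (- \<i> * g) = \<i> * (u - v)" by (simp add: u_def v_def algebra_simps)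
  have uv: "u * v = p * q" using assms by (simp add: u_def v_def)
  have c: "(u + v) * (u + v) + (\<i> * (u - v)) * (\<i> * (u - v)) = 4 * (u * v)"
    by (simp add: algebra_simps)
  have d: "(p * 1 + q * (-1)) * (p * 1 + q * (-1)) - (p * 1 + q * 1) * (p * 1 + q * 1) = - 4 * (p * q)"
    by (simp add: algebra_simps)
  show ?thesis unfolding a b using c d uv by (simp add: algebra_simps)
qed

lemma alg_Lam:
  fixes g p q :: complex
  assumes "g \<noteq> 0"
  shows "2 * ((p * (1 / g) + q * g) * cnj (p * (1 / g) + q * g) + (p * (\<i> / g) + q * (- \<i> * g)) * cnj (p * (\<i> / g) + q * (- \<i> * g))
   + (p * 1 + q * (-1)) * cnj (p * 1 + q * (-1)) - (p * 1 + q * 1) * cnj (p * 1 + q * 1))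
   = complex_of_real (4 / (cmod g)\<^sup>2 * (cmod (p - complex_of_real ((cmod g)\<^sup>2) * q))\<^sup>2)"
proof -
  define u where "u = p / g"
  define v where "v = q * g"
  define N where "N = g * cnj g"
  have N0: "N \<noteq> 0" using assms by (simp add: N_def)
  have a: "p * (1 / g) + q * g = u + v" by (simp add: u_def v_def)
  have b: "p * (\<i> / g) + q * (- \<i> * g) = \<i> * (u - v)" by (simp add: u_def v_def algebra_simps)
  have c: "(u + v) * cnj (u + v) + (\<i> * (u - v)) * cnj (\<i> * (u - v)) = 2 * (u * cnj u + v * cnj v)"
    by (simp add: algebra_simps)
  have d: "(p * 1 + q * (-1)) * cnj (p * 1 + q * (-1)) - (p * 1 + q * 1) * cnj (p * 1 + q * 1)
      = - 2 * (p * cnj q + q * cnj p)"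
    by (simp add: algebra_simps)
  have uu: "u * cnj u = p * cnj p / N" by (simp add: u_def N_def)
  have vv: "v * cnj v = q * cnj q * N" by (simp add: v_def N_def)
  have n: "complex_of_real ((cmod g)\<^sup>2) = N" unfolding N_def by (rule complex_norm_square)
  have n2: "complex_of_real ((cmod (p - N * q))\<^sup>2) = (p - N * q) * cnj (p - N * q)"
    by (rule complex_norm_square)
  have cN: "cnj N = N" by (simp add: N_def)
  have "complex_of_real (4 / (cmod g)\<^sup>2 * (cmod (p - complex_of_real ((cmod g)\<^sup>2) * q))\<^sup>2)
      = 4 / N * ((p - N * q) * cnj (p - N * q))"
    by (simp only: of_real_mult of_real_divide n2 n of_real_numeral)
  also have "\<dots> = 4 * (p * cnj p / N - p * cnj q - q * cnj p + q * cnj q * N)"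
    using N0 cN by (simp add: field_simps)
  also have "\<dots> = 2 * (2 * (u * cnj u + v * cnj v) - 2 * (p * cnj q + q * cnj p))"
    unfolding uu vv by (simp add: algebra_simps)
  finally show ?thesis unfolding a b using c d by (simp add: algebra_simps)
qed



lemma vec4_has_derivative:
  fixes f1 f2 f3 f4 :: "complex \<Rightarrow> 'b::real_normed_vector"
  assumes "(f1 has_derivative D1) (at z)" "(f2 has_derivative D2) (at z)"
    "(f3 has_derivative D3) (at z)" "(f4 has_derivative D4) (at z)"
  shows "((\<lambda>x. vector [f1 x, f2 x, f3 x, f4 x] :: 'b^4) has_derivative (\<lambda>h. vector [D1 h, D2 h, D3 h, D4 h])) (at z)"
proof -
  have "((\<lambda>x. \<chi> i. (vector [f1 x, f2 x, f3 x, f4 x] :: 'b^4) $ i) has_derivative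
        (\<lambda>h. \<chi> i. (vector [D1 h, D2 h, D3 h, D4 h] :: 'b^4) $ i)) (at z)"
  proof (rule vec_has_derivative)
    fix i :: 4
    show "((\<lambda>x. (vector [f1 x, f2 x, f3 x, f4 x] :: 'b^4) $ i) has_derivative
        (\<lambda>h. (vector [D1 h, D2 h, D3 h, D4 h] :: 'b^4) $ i)) (at z)"
      using exhaust_4[of i] assms by auto
  qed
  then show ?thesis by simp
qed

lemma cvec_linear: "linear cvec"
  by (rule linearI) (simp_all add: cvec_def vec_eq_iff of_real_def scaleR_add_left)

lemma cvec_bl: "bounded_linear cvec"
  using cvec_linear by (simp add: linear_conv_bounded_linear)

lemma cvec_nth [simp]: "cvec x $ i = complex_of_real (x $ i)"
  by (simp add: cvec_def)

lemma DzV_formula: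
  assumes "(Y has_derivative DY) (at z)"
  shows "DzV (\<lambda>w. cvec (Y w)) z = (\<chi> k. (complex_of_real (DY 1 $ k) - \<i> * complex_of_real (DY \<i> $ k)) / 2)"
proof -
  have d: "((\<lambda>w. cvec (Y w)) has_derivative (\<lambda>h. cvec (DY h))) (at z)"
    using has_derivative_compose[OF assms bounded_linear.has_derivative[OF cvec_bl has_derivative_ident]] by simp
  show ?thesis unfolding DzV_def pu_eq[OF d] pv_eq[OF d]
    by (simp add: vec_eq_iff vector_scalar_mult_def field_simps)
qed

lemma DzbV_formula:
  assumes "(F has_derivative DF) (at z)"
  shows "DzbV F z = (\<chi> k. (DF 1 $ k + \<i> * DF \<i> $ k) / 2)"
  unfolding DzbV_def pu_eq[OF assms] pv_eq[OF assms]
  by (simp add: vec_eq_iff vector_scalar_mult_def field_simps)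

lemma lor_scale: "lor (c *s x) (c *s y) = c * c * lor x y"
  by (simp add: lor_def vector_scalar_mult_def algebra_simps)



lemma half_re: "(complex_of_real (Re c) - \<i> * complex_of_real (Re (c * \<i>))) / 2 = c / 2"
  by (simp add: complex_eq_iff)

lemma cconj_vec4: "cconj (vector [a, b, c, d]) = vector [cnj a, cnj b, cnj c, cnj d]"
  by (simp add: vec4_eq_iff cconj_def)

lemma smult_vec4: "(k::complex) *s (vector [a, b, c, d] :: complex^4) = vector [k * a, k * b, k * c, k * d]"
  by (simp add: vec4_eq_iff)

lemma add_vec4: "(vector [a, b, c, d] :: complex^4) + vector [a', b', c', d'] = vector [a + a', b + b', c + c', d + d']"
  by (simp add: vec4_eq_iff)

theorem mainTheorem5:
  fixes \<Omega> :: "complex set" and g :: "complex \<Rightarrow> complex" and P Q :: "complex \<Rightarrow> real"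
  assumes "open \<Omega>" and "connected \<Omega>" and "simply_connected \<Omega>"
    and "weierstrass_first_kind \<Omega> g P Q"
  shows "\<exists>X :: complex \<Rightarrow> real ^ 4.
     (\<forall>z\<in>\<Omega>. X differentiable (at z) \<and>
        DzV (\<lambda>w. cvec (X w)) z = Dz (cfun P) z *s Pvec (g z) + Dz (cfun Q) z *s Qvec (g z))
   \<and> (\<forall>Y :: complex \<Rightarrow> real ^ 4.
        (\<forall>z\<in>\<Omega>. Y differentiable (at z) \<and>
           DzV (\<lambda>w. cvec (Y w)) z = Dz (cfun P) z *s Pvec (g z) + Dz (cfun Q) z *s Qvec (g z))
        \<longrightarrow> (\<exists>c. \<forall>z\<in>\<Omega>. Y z = X z + c))
   \<and> (\<forall>z\<in>\<Omega>. DzbV (DzV (\<lambda>w. cvec (X w))) z = Dzb (Dz (cfun Q)) z *s Gvec (g z))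
   \<and> (\<exists>c3 c4. \<forall>z\<in>\<Omega>. X z $ 3 = P z - Q z + c3 \<and> X z $ 4 = P z + Q z + c4)
   \<and> (\<forall>z\<in>\<Omega>. lor (Gvec (g z)) (Gvec (g z)) = 0 \<and>
              lor (DzV (\<lambda>w. cvec (X w)) z) (Gvec (g z)) = 0)
   \<and> conformal_spacelike_immersion \<Omega> X
   \<and> (\<forall>z\<in>\<Omega>. Lam X z = complex_of_real (4 / (cmod (g z))\<^sup>2 *
          (cmod (Dz (cfun P) z - complex_of_real ((cmod (g z))\<^sup>2) * Dz (cfun Q) z))\<^sup>2))
   \<and> marginally_trapped \<Omega> X"
proof -
  note oS = assms(1)
  note wd = wdata[OF assms(4)]
  obtain x1 x2 :: "complex \<Rightarrow> real" where xs: "\<forall>z\<in>\<Omega>.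
     (x1 has_derivative (\<lambda>h. Re (2 * (Dz (cfun P) z / g z + Dz (cfun Q) z * g z) * h))) (at z) \<and>
     (x2 has_derivative (\<lambda>h. Re (2 * (\<i> * Dz (cfun P) z / g z - \<i> * Dz (cfun Q) z * g z) * h))) (at z)"
    using exist_xs[OF assms(1,3,4)] by blast
  define p where "p = Dz (cfun P)"
  define q where "q = Dz (cfun Q)"
  define X where "X = (\<lambda>w. vector [x1 w, x2 w, P w - Q w, P w + Q w] :: real^4)"
  have dP: "(P has_derivative (\<lambda>h. Re h * pu P z + Im h * pv P z)) (at z)" if "z \<in> \<Omega>" for z
    using C1_deriv[OF C2_parts(1)[OF wd(3)] that] by simp
  have dQ: "(Q has_derivative (\<lambda>h. Re h * pu Q z + Im h * pv Q z)) (at z)" if "z \<in> \<Omega>" for z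
    using C1_deriv[OF C2_parts(1)[OF wd(4)] that] by simp
  have pz: "p z = (complex_of_real (pu P z) - \<i> * complex_of_real (pv P z)) / 2" if "z \<in> \<Omega>" for z
    unfolding p_def Dz_cfun[OF C2_parts(1)[OF wd(3)] that] dzf_def ..
  have qz: "q z = (complex_of_real (pu Q z) - \<i> * complex_of_real (pv Q z)) / 2" if "z \<in> \<Omega>" for z
    unfolding q_def Dz_cfun[OF C2_parts(1)[OF wd(4)] that] dzf_def ..
  define DX where "DX = (\<lambda>z h. vector [Re (2 * (p z / g z + q z * g z) * h),
      Re (2 * (\<i> * p z / g z - \<i> * q z * g z) * h),
      (Re h * pu P z + Im h * pv P z) - (Re h * pu Q z + Im h * pv Q z),
      (Re h * pu P z + Im h * pv P z) + (Re h * pu Q z + Im h * pv Q z)] :: real^4)"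
  have dX: "(X has_derivative DX z) (at z)" if z: "z \<in> \<Omega>" for z
    unfolding X_def DX_def p_def q_def
    by (rule vec4_has_derivative) (use xs z dP[OF z] dQ[OF z] in \<open>auto intro: has_derivative_diff has_derivative_add\<close>)
  define V where "V = (\<lambda>z. vector [p z * (1 / g z) + q z * g z, p z * (\<i> / g z) + q z * (- \<i> * g z),
     p z * 1 + q z * (-1), p z * 1 + q z * 1] :: complex^4)"
  have XzV: "DzV (\<lambda>w. cvec (X w)) z = V z" if z: "z \<in> \<Omega>" for z
  proof -
    have "DzV (\<lambda>w. cvec (X w)) z = (\<chi> k. (complex_of_real (DX z 1 $ k) - \<i> * complex_of_real (DX z \<i> $ k)) / 2)"
      by (rule DzV_formula[OF dX[OF z]])
    also have "\<dots> = V z"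
      unfolding vec4_eq_iff
    proof (intro conjI)
      show "(\<chi> k. (complex_of_real (DX z 1 $ k) - \<i> * complex_of_real (DX z \<i> $ k)) / 2) $ 1 = V z $ 1"
      proof -
        have "(\<chi> k. (complex_of_real (DX z 1 $ k) - \<i> * complex_of_real (DX z \<i> $ k)) / 2) $ 1
           = (complex_of_real (Re (2 * (p z / g z + q z * g z))) - \<i> * complex_of_real (Re (2 * (p z / g z + q z * g z) * \<i>))) / 2"
          by (simp only: DX_def vector_4 vec_lambda_beta mult_1_right)
        also have "\<dots> = (2 * (p z / g z + q z * g z)) / 2" by (rule half_re)
        also have "\<dots> = V z $ 1" by (simp add: V_def)
        finally show ?thesis .
      qed
      show "(\<chi> k. (complex_of_real (DX z 1 $ k) - \<i> * complex_of_real (DX z \<i> $ k)) / 2) $ 2 = V z $ 2"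
      proof -
        have "(\<chi> k. (complex_of_real (DX z 1 $ k) - \<i> * complex_of_real (DX z \<i> $ k)) / 2) $ 2
           = (complex_of_real (Re (2 * (\<i> * p z / g z - \<i> * q z * g z))) - \<i> * complex_of_real (Re (2 * (\<i> * p z / g z - \<i> * q z * g z) * \<i>))) / 2"
          by (simp only: DX_def vector_4 vec_lambda_beta mult_1_right)
        also have "\<dots> = (2 * (\<i> * p z / g z - \<i> * q z * g z)) / 2" by (rule half_re)
        also have "\<dots> = V z $ 2" using wd(2)[OF z] by (simp add: V_def field_simps)
        finally show ?thesis .
      qed
      show "(\<chi> k. (complex_of_real (DX z 1 $ k) - \<i> * complex_of_real (DX z \<i> $ k)) / 2) $ 3 = V z $ 3"
        using pz[OF z] qz[OF z] by (simp add: DX_def V_def field_simps)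
      show "(\<chi> k. (complex_of_real (DX z 1 $ k) - \<i> * complex_of_real (DX z \<i> $ k)) / 2) $ 4 = V z $ 4"
        using pz[OF z] qz[OF z] by (simp add: DX_def V_def field_simps)
    qed
    finally show ?thesis .
  qed
  have VPQ: "V z = p z *s Pvec (g z) + q z *s Qvec (g z)" for z
    by (simp add: V_def Pvec_def Qvec_def smult_vec4 add_vec4)
  have part1: "\<forall>z\<in>\<Omega>. X differentiable (at z) \<and>
        DzV (\<lambda>w. cvec (X w)) z = Dz (cfun P) z *s Pvec (g z) + Dz (cfun Q) z *s Qvec (g z)"
  proof (intro ballI conjI)
    fix z assume z: "z \<in> \<Omega>"
    show "X differentiable (at z)" using dX[OF z] unfolding differentiable_def by blast
    show "DzV (\<lambda>w. cvec (X w)) z = Dz (cfun P) z *s Pvec (g z) + Dz (cfun Q) z *s Qvec (g z)"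
      using XzV[OF z] VPQ[of z] unfolding p_def q_def by simp
  qed
  have part2: "\<forall>Y :: complex \<Rightarrow> real ^ 4.
        (\<forall>z\<in>\<Omega>. Y differentiable (at z) \<and>
           DzV (\<lambda>w. cvec (Y w)) z = Dz (cfun P) z *s Pvec (g z) + Dz (cfun Q) z *s Qvec (g z))
        \<longrightarrow> (\<exists>c. \<forall>z\<in>\<Omega>. Y z = X z + c)"
  proof (intro allI impI)
    fix Y :: "complex \<Rightarrow> real ^ 4"
    assume HY: "\<forall>z\<in>\<Omega>. Y differentiable (at z) \<and>
           DzV (\<lambda>w. cvec (Y w)) z = Dz (cfun P) z *s Pvec (g z) + Dz (cfun Q) z *s Qvec (g z)"
    have d0: "((\<lambda>w. Y w - X w) has_derivative (\<lambda>h. 0)) (at z)" if z: "z \<in> \<Omega>" for z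
    proof -
      obtain DY where dY: "(Y has_derivative DY) (at z)" using HY z unfolding differentiable_def by blast
      have eq: "DzV (\<lambda>w. cvec (Y w)) z = DzV (\<lambda>w. cvec (X w)) z" using HY z part1 by simp
      have comp: "DY 1 $ k = DX z 1 $ k \<and> DY \<i> $ k = DX z \<i> $ k" for k
      proof -
        from eq have "(\<chi> k. (complex_of_real (DY 1 $ k) - \<i> * complex_of_real (DY \<i> $ k)) / 2) $ k
           = (\<chi> k. (complex_of_real (DX z 1 $ k) - \<i> * complex_of_real (DX z \<i> $ k)) / 2) $ k"
          unfolding DzV_formula[OF dY] DzV_formula[OF dX[OF z]] by simp
        then have "(complex_of_real (DY 1 $ k) - \<i> * complex_of_real (DY \<i> $ k)) / 2
            = (complex_of_real (DX z 1 $ k) - \<i> * complex_of_real (DX z \<i> $ k)) / 2" by simp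
        then show ?thesis by (simp add: complex_eq_iff)
      qed
      have "DY h = DX z h" for h
        using lin_decomp[OF has_derivative_linear[OF dY], of h]
          lin_decomp[OF has_derivative_linear[OF dX[OF z]], of h] comp
        by (simp add: vec_eq_iff)
      then have "(\<lambda>h. DY h - DX z h) = (\<lambda>h. 0)" by auto
      with has_derivative_diff[OF dY dX[OF z]] show ?thesis by simp
    qed
    show "\<exists>c. \<forall>z\<in>\<Omega>. Y z = X z + c"
    proof (cases "\<Omega> = {}")
      case True then show ?thesis by auto
    next
      case False then obtain z0 where z0: "z0 \<in> \<Omega>" by blast
      have "Y z - X z = Y z0 - X z0" if "z \<in> \<Omega>" for z
        by (rule has_derivative_zero_unique_connected[OF oS assms(2) d0 that z0])
      then show ?thesis by (intro exI[of _ "Y z0 - X z0"]) (auto simp: algebra_simps)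
    qed
  qed
  define gi where "gi = (\<lambda>w. 1 / g w)"
  define g1 where "g1 = deriv g"
  define gi1 where "gi1 = deriv gi"
  have hg: "g holomorphic_on \<Omega>" by (rule wd(1))
  have hgi: "gi holomorphic_on \<Omega>" unfolding gi_def using wd(2) by (intro holomorphic_intros hg) auto
  have dg: "(g has_derivative (\<lambda>h. g1 w * h)) (at w)" if "w \<in> \<Omega>" for w
    using holomorphic_derivI[OF hg oS that] unfolding g1_def has_field_derivative_def .
  have dgi: "(gi has_derivative (\<lambda>h. gi1 w * h)) (at w)" if "w \<in> \<Omega>" for w
    using holomorphic_derivI[OF hgi oS that] unfolding gi1_def has_field_derivative_def .
  have dp: "(p has_derivative Ddz P w) (at w)" if "w \<in> \<Omega>" for w
    unfolding p_def using Dz_deriv[OF oS wd(3) that] .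
  have dq: "(q has_derivative Ddz Q w) (at w)" if "w \<in> \<Omega>" for w
    unfolding q_def using Dz_deriv[OF oS wd(4) that] .
  define V' where "V' = (\<lambda>w. vector [p w * gi w + q w * g w, p w * (\<i> * gi w) + q w * (- \<i> * g w),
     p w - q w, p w + q w] :: complex^4)"
  have VV': "DzV (\<lambda>w. cvec (X w)) w = V' w" if "w \<in> \<Omega>" for w
    unfolding XzV[OF that] by (simp add: V_def V'_def gi_def)
  define DV where "DV = (\<lambda>w h. vector [p w * (gi1 w * h) + Ddz P w h * gi w + (q w * (g1 w * h) + Ddz Q w h * g w),
     p w * (\<i> * (gi1 w * h)) + Ddz P w h * (\<i> * gi w) + (q w * (- \<i> * (g1 w * h)) + Ddz Q w h * (- \<i> * g w)),
     Ddz P w h - Ddz Q w h, Ddz P w h + Ddz Q w h] :: complex^4)"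
  have dV': "(V' has_derivative DV w) (at w)" if w: "w \<in> \<Omega>" for w
    unfolding V'_def DV_def
    by (intro vec4_has_derivative has_derivative_add has_derivative_diff has_derivative_mult
          has_derivative_mult_right dp dq dg dgi w)
  have dXz: "(DzV (\<lambda>w. cvec (X w)) has_derivative DV w) (at w)" if w: "w \<in> \<Omega>" for w
    by (rule has_derivative_transform_within_open[OF dV'[OF w] oS w]) (simp add: VV')
  have part3: "\<forall>z\<in>\<Omega>. DzbV (DzV (\<lambda>w. cvec (X w))) z = Dzb (Dz (cfun Q)) z *s Gvec (g z)"
  proof
    fix z assume z: "z \<in> \<Omega>"
    define zq where "zq = Dzb (Dz (cfun Q)) z"
    have B: "Ddz Q z 1 + \<i> * Ddz Q z \<i> = 2 * zq"
      unfolding zq_def Dzb_eq[OF Dz_deriv[OF oS wd(4) z]] by simp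
    have A0: "(Ddz P z 1 + \<i> * Ddz P z \<i>) / 2 = complex_of_real ((cmod (g z))\<^sup>2) * zq"
      using wd(5)[OF z] unfolding zq_def Dzb_eq[OF Dz_deriv[OF oS wd(4) z]] Dzb_eq[OF Dz_deriv[OF oS wd(3) z]] .
    have A: "Ddz P z 1 + \<i> * Ddz P z \<i> = 2 * complex_of_real ((cmod (g z))\<^sup>2) * zq"
      using A0 by (simp add: field_simps)
    have gg: "complex_of_real ((cmod (g z))\<^sup>2) * gi z = cnj (g z)"
    proof -
      have "complex_of_real ((cmod (g z))\<^sup>2) = g z * cnj (g z)" by (rule complex_norm_square)
      then show ?thesis using wd(2)[OF z] unfolding gi_def by simp
    qed
    have re: "complex_of_real (2 * Re (g z)) = cnj (g z) + g z" by (simp add: complex_eq_iff)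
    have im: "complex_of_real (2 * Im (g z)) = \<i> * (cnj (g z) - g z)" by (simp add: complex_eq_iff)
    have n1: "complex_of_real (-1 + (cmod (g z))\<^sup>2) = complex_of_real ((cmod (g z))\<^sup>2) - 1" by simp
    have n2: "complex_of_real (1 + (cmod (g z))\<^sup>2) = complex_of_real ((cmod (g z))\<^sup>2) + 1" by simp
    have c1: "DV z 1 $ 1 + \<i> * DV z \<i> $ 1 = (Ddz P z 1 + \<i> * Ddz P z \<i>) * gi z + (Ddz Q z 1 + \<i> * Ddz Q z \<i>) * g z"
      by (simp add: DV_def algebra_simps)
    have c2: "DV z 1 $ 2 + \<i> * DV z \<i> $ 2 = \<i> * ((Ddz P z 1 + \<i> * Ddz P z \<i>) * gi z - (Ddz Q z 1 + \<i> * Ddz Q z \<i>) * g z)"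
      by (simp add: DV_def algebra_simps)
    have c3: "DV z 1 $ 3 + \<i> * DV z \<i> $ 3 = (Ddz P z 1 + \<i> * Ddz P z \<i>) - (Ddz Q z 1 + \<i> * Ddz Q z \<i>)"
      by (simp add: DV_def algebra_simps)
    have c4: "DV z 1 $ 4 + \<i> * DV z \<i> $ 4 = (Ddz P z 1 + \<i> * Ddz P z \<i>) + (Ddz Q z 1 + \<i> * Ddz Q z \<i>)"
      by (simp add: DV_def algebra_simps)
    have "DzbV (DzV (\<lambda>w. cvec (X w))) z = (\<chi> k. (DV z 1 $ k + \<i> * DV z \<i> $ k) / 2)"
      by (rule DzbV_formula[OF dXz[OF z]])
    also have "\<dots> = zq *s Gvec (g z)"
      unfolding vec4_eq_iff vec_lambda_beta vector_smult_component
    proof (intro conjI)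
      show "(DV z 1 $ 1 + \<i> * DV z \<i> $ 1) / 2 = zq * Gvec (g z) $ 1"
        unfolding c1 A B Gvec_def vector_4 re using gg by (simp add: algebra_simps)
      show "(DV z 1 $ 2 + \<i> * DV z \<i> $ 2) / 2 = zq * Gvec (g z) $ 2"
      proof -
        have "(\<i> * (2 * complex_of_real ((cmod (g z))\<^sup>2) * zq * gi z - 2 * zq * g z)) / 2
            = \<i> * zq * (complex_of_real ((cmod (g z))\<^sup>2) * gi z) - \<i> * zq * g z"
          by (simp add: field_simps)
        also have "\<dots> = zq * (\<i> * (cnj (g z) - g z))" unfolding gg by (simp add: algebra_simps)
        finally show ?thesis unfolding c2 A B Gvec_def vector_4 im .
      qed
      show "(DV z 1 $ 3 + \<i> * DV z \<i> $ 3) / 2 = zq * Gvec (g z) $ 3"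
        unfolding c3 A B Gvec_def vector_4 n1 by (simp add: field_simps)
      show "(DV z 1 $ 4 + \<i> * DV z \<i> $ 4) / 2 = zq * Gvec (g z) $ 4"
        unfolding c4 A B Gvec_def vector_4 n2 by (simp add: field_simps)
    qed
    finally show "DzbV (DzV (\<lambda>w. cvec (X w))) z = Dzb (Dz (cfun Q)) z *s Gvec (g z)"
      unfolding zq_def .
  qed
  have part4: "\<exists>c3 c4. \<forall>z\<in>\<Omega>. X z $ 3 = P z - Q z + c3 \<and> X z $ 4 = P z + Q z + c4"
    by (intro exI[of _ 0]) (simp add: X_def)
  have GG: "lor (Gvec (g z)) (Gvec (g z)) = 0" for z
    unfolding Gvec_def lor_vec4 by (rule alg_GG)
  have part5: "\<forall>z\<in>\<Omega>. lor (Gvec (g z)) (Gvec (g z)) = 0 \<and>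
              lor (DzV (\<lambda>w. cvec (X w)) z) (Gvec (g z)) = 0"
  proof (intro ballI conjI GG)
    fix z assume z: "z \<in> \<Omega>"
    show "lor (DzV (\<lambda>w. cvec (X w)) z) (Gvec (g z)) = 0"
      unfolding XzV[OF z] V_def Gvec_def lor_vec4 by (rule alg_XG[OF wd(2)[OF z]])
  qed
  have LamX: "Lam X z = complex_of_real (4 / (cmod (g z))\<^sup>2 *
          (cmod (Dz (cfun P) z - complex_of_real ((cmod (g z))\<^sup>2) * Dz (cfun Q) z))\<^sup>2)" if z: "z \<in> \<Omega>" for z
    unfolding Lam_def XzV[OF z] V_def cconj_vec4 lor_vec4 p_def[symmetric] q_def[symmetric]
    by (rule alg_Lam[OF wd(2)[OF z]])
  have part6: "conformal_spacelike_immersion \<Omega> X"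
    unfolding conformal_spacelike_immersion_def
  proof (intro ballI conjI)
    fix z assume z: "z \<in> \<Omega>"
    show "X differentiable (at z)" using part1 z by blast
    show "lor (DzV (\<lambda>w. cvec (X w)) z) (DzV (\<lambda>w. cvec (X w)) z) = 0"
      unfolding XzV[OF z] V_def lor_vec4 by (rule alg_XX[OF wd(2)[OF z]])
    show "Im (Lam X z) = 0" unfolding LamX[OF z] by simp
    have "0 < 4 / (cmod (g z))\<^sup>2 * (cmod (Dz (cfun P) z - complex_of_real ((cmod (g z))\<^sup>2) * Dz (cfun Q) z))\<^sup>2"
      using wd(2)[OF z] wd(6)[OF z] by simp
    then show "0 < Re (Lam X z)" unfolding LamX[OF z] by simp
  qed
  have part7: "marginally_trapped \<Omega> X"
    unfolding marginally_trapped_def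
  proof
    fix z assume z: "z \<in> \<Omega>"
    have "meanH X z = (4 / Lam X z * Dzb (Dz (cfun Q)) z) *s Gvec (g z)"
      unfolding meanH_def using part3 z by (simp add: vector_smult_assoc)
    then show "lor (meanH X z) (meanH X z) = 0" by (simp add: lor_scale GG)
  qed
  show ?thesis
    using part1 part2 part3 part4 part5 part6 LamX part7 by blast
qed


end
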